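(* Let $G$ be a connected map-rich graph without loops all of whose vertices have odd degree. Let $\gamma$ be the dimension of the bicycle space of $G$ and $v=|V(G)|$. Then the maximum number $\alpha$ of pairwise non-adjacent vertices of $G$ satisfies $\alpha\le v-1-\gamma$. In particular, if $G$ is planar, then $\alpha\le v-z$, where $z$ is the number of zigzag paths in a planar realization of $G$.
   Context: A map is a triple $M=(C_M,v_M,f_M)$ where $C_M$ is a finite cubic graph (multiple edges allowed) and $v_M,f_M$ are disjoint perfect matchings whose union is a disjoint union of 4-cycles, the squares ($SQ(M)$). $a_M=E(C_M)\setminus(v_M\cup f_M)$; $z_M$ is the matching formed by the diagonals of the squares; $Q_M=C_M\cup z_M$. For a map $X$, $G_X$ has vertices the cycles of $v_X\cup a_X$ and edges the squares, each square joining the cycles containing its two $v_X$-edges. The dual is $D=(C_M,f_M,v_M)$, the phial $P=(Q_M\setminus v_M,z_M,f_M)$; $V,F,Z$ are the $GF(2)$-coboundary spaces of $G_M,G_D,G_P$ (subsets of $SQ(M)$), $V^\perp$ the cycle space of $G_M$. $M$ is rich if $V^\perp=F+Z$; $G$ is map-rich if $G\cong G_M$ for a rich map $M$. The bicycle space of a graph is the intersection of its cycle space and coboundary space. $\chi(M)=\#(v_M\cup a_M\text{-cycles})-|SQ(M)|+\#(f_M\cup a_M\text{-cycles})$; a planar map is one with $C_M$ connected and $\chi(M)=2$. For planar $G$, the number of zigzag paths of a planar realization is the number of cycles of $z_M\cup a_M$ (in $Q_M$) for a planar map $M$ with $G_M\cong G$ (equivalently, the number of Petrie walks of a plane embedding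 of $G$). *)

theory Defs
  imports Main "HOL.Vector_Spaces" "HOL-Library.Z2" "HOL-Library.Function_Algebras"
begin

text \<open>A multigraph is a triple (vertex set, edge set, endpoint map); an edge e has
  endpoint set ends e of cardinality 1 (a loop) or 2.\<close>

type_synonym ('v,'e) mgraph = "'v set \<times> 'e set \<times> ('e \<Rightarrow> 'v set)"

definition mgraph :: "('v,'e) mgraph \<Rightarrow> bool" where
  "mgraph G = (case G of (Vs, Es, ends) \<Rightarrow>
     finite Vs \<and> finite Es \<and> (\<forall>e\<in>Es. ends e \<subseteq> Vs \<and> (card (ends e) = 1 \<or> card (ends e) = 2)))"

definition gverts :: "('v,'e) mgraph \<Rightarrow> 'v set" where "gverts G = fst G"
definition gedges :: "('v,'e) mgraph \<Rightarrow> 'e set" where "gedges G = fst (snd G)"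
definition gends :: "('v,'e) mgraph \<Rightarrow> 'e \<Rightarrow> 'v set" where "gends G = snd (snd G)"

definition loopless :: "('v,'e) mgraph \<Rightarrow> bool" where
  "loopless G = (\<forall>e\<in>gedges G. card (gends G e) = 2)"

text \<open>Degree of u within an edge subset A (loops counted twice).\<close>
definition sub_degree :: "('v,'e) mgraph \<Rightarrow> 'e set \<Rightarrow> 'v \<Rightarrow> nat" where
  "sub_degree G A u = card {e\<in>A. u \<in> gends G e} + card {e\<in>A. gends G e = {u}}"

definition degree :: "('v,'e) mgraph \<Rightarrow> 'v \<Rightarrow> nat" where
  "degree G u = sub_degree G (gedges G) u"

definition adjacent :: "('v,'e) mgraph \<Rightarrow> 'v \<Rightarrow> 'v \<Rightarrow> bool" where
  "adjacent G u w = (\<exists>e\<in>gedges G. u \<in> gends G e \<and> w \<in> gends G e \<and> u \<noteq> w)"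

definition gconnected :: "('v,'e) mgraph \<Rightarrow> bool" where
  "gconnected G = (gverts G \<noteq> {} \<and>
     (\<forall>u\<in>gverts G. \<forall>w\<in>gverts G. (u, w) \<in> {(x, y). adjacent G x y}\<^sup>*))"

definition independent_set :: "('v,'e) mgraph \<Rightarrow> 'v set \<Rightarrow> bool" where
  "independent_set G S = (S \<subseteq> gverts G \<and> (\<forall>u\<in>S. \<forall>w\<in>S. \<not> adjacent G u w))"

definition independence_number :: "('v,'e) mgraph \<Rightarrow> nat" where
  "independence_number G = Max {card S | S. independent_set G S}"

definition mgraph_iso :: "('v,'e) mgraph \<Rightarrow> ('w,'d) mgraph \<Rightarrow> bool" where
  "mgraph_iso G H = (\<exists>\<phi> \<psi>. bij_betw \<phi> (gverts G) (gverts H) \<and> bij_betw \<psi> (gedges G) (gedges H)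
      \<and> (\<forall>e\<in>gedges G. gends H (\<psi> e) = \<phi> ` gends G e))"

definition coboundary :: "('v,'e) mgraph \<Rightarrow> 'v set \<Rightarrow> 'e set" where
  "coboundary G U = {e\<in>gedges G. gends G e \<inter> U \<noteq> {} \<and> gends G e - U \<noteq> {}}"

definition cut_space :: "('v,'e) mgraph \<Rightarrow> 'e set set" where
  "cut_space G = {coboundary G U | U. U \<subseteq> gverts G}"

definition cycle_space :: "('v,'e) mgraph \<Rightarrow> 'e set set" where
  "cycle_space G = {A. A \<subseteq> gedges G \<and> (\<forall>u\<in>gverts G. even (sub_degree G A u))}"

definition bicycle_space :: "('v,'e) mgraph \<Rightarrow> 'e set set" where
  "bicycle_space G = cycle_space G \<inter> cut_space G"

text \<open>Edge subsets are identified with vectors in GF(2)^E (type bit of HOL-Library.Z2);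
  dimension is the library's vector-space dimension.\<close>
definition bit_ind :: "'e set \<Rightarrow> 'e \<Rightarrow> bit" where
  "bit_ind A = (\<lambda>x. if x \<in> A then 1 else 0)"

definition gf2_dim :: "'e set set \<Rightarrow> nat" where
  "gf2_dim W = vector_space.dim (\<lambda>(c::bit) (g::'e \<Rightarrow> bit). (\<lambda>x. c * g x)) (bit_ind ` W)"

definition set_sum :: "'e set set \<Rightarrow> 'e set set \<Rightarrow> 'e set set" where
  "set_sum X Y = {(A - B) \<union> (B - A) | A B. A \<in> X \<and> B \<in> Y}"

text \<open>A map M = (C_M, v_M, f_M) is encoded by the vertex set W of the cubic graph C_M and the
  three perfect matchings v_M, f_M, a_M as fixed-point-free involutions of W
  (each vertex is matched to its partner).  Since C_M is cubic and v_M, f_M are disjoint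
  perfect matchings, a_M is also a perfect matching, and every vertex has exactly one
  incident edge of each class; hence this encoding is faithful (parallel edges of
  different classes are allowed).  The union v_M \<union> f_M being a disjoint union of 4-cycles
  means exactly that v and f commute and v x \<noteq> f x.\<close>

definition fpf_involution :: "'w set \<Rightarrow> ('w \<Rightarrow> 'w) \<Rightarrow> bool" where
  "fpf_involution W g = (\<forall>x\<in>W. g x \<in> W \<and> g x \<noteq> x \<and> g (g x) = x)"

definition is_map :: "'w set \<Rightarrow> ('w \<Rightarrow> 'w) \<Rightarrow> ('w \<Rightarrow> 'w) \<Rightarrow> ('w \<Rightarrow> 'w) \<Rightarrow> bool" where
  "is_map W v f a = (finite W \<and> fpf_involution W v \<and> fpf_involution W f \<and> fpf_involution W a
     \<and> (\<forall>x\<in>W. v (f x) = f (v x) \<and> v x \<noteq> f x))"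

text \<open>Vertex set of the component containing x of the 2-regular subgraph g \<union> h.\<close>
definition orb2 :: "('w \<Rightarrow> 'w) \<Rightarrow> ('w \<Rightarrow> 'w) \<Rightarrow> 'w \<Rightarrow> 'w set" where
  "orb2 g h x = {y. (x, y) \<in> ({(u, g u) | u. True} \<union> {(u, h u) | u. True})\<^sup>*}"

definition cycles2 :: "'w set \<Rightarrow> ('w \<Rightarrow> 'w) \<Rightarrow> ('w \<Rightarrow> 'w) \<Rightarrow> 'w set set" where
  "cycles2 W g h = orb2 g h ` W"

definition squares :: "'w set \<Rightarrow> ('w \<Rightarrow> 'w) \<Rightarrow> ('w \<Rightarrow> 'w) \<Rightarrow> 'w set set" where
  "squares W v f = cycles2 W v f"

text \<open>G_X for the map X=(W,v,f,a): vertices the cycles of v \<union> a, edges the squares; a square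
  joins the (v \<union> a)-cycles containing its two v-edges, i.e. the (v \<union> a)-cycles meeting it.\<close>
definition map_graph :: "'w set \<Rightarrow> ('w \<Rightarrow> 'w) \<Rightarrow> ('w \<Rightarrow> 'w) \<Rightarrow> ('w \<Rightarrow> 'w)
    \<Rightarrow> ('w set, 'w set) mgraph" where
  "map_graph W v f a = (cycles2 W v a, squares W v f, \<lambda>S. orb2 v a ` S)"

text \<open>z_M: diagonals of the squares, z x = v (f x).\<close>
definition diag :: "('w \<Rightarrow> 'w) \<Rightarrow> ('w \<Rightarrow> 'w) \<Rightarrow> 'w \<Rightarrow> 'w" where
  "diag v f = (\<lambda>x. v (f x))"

text \<open>V, F, Z: coboundary spaces of G_M, of G_D for the dual D=(C_M,f_M,v_M), and of G_P for
  the phial P=(Q_M - v_M, z_M, f_M) (whose a-matching is again a_M).\<close>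
definition Vsp where "Vsp W v f a = cut_space (map_graph W v f a)"
definition Fsp where "Fsp W v f a = cut_space (map_graph W f v a)"
definition Zsp where "Zsp W v f a = cut_space (map_graph W (diag v f) f a)"

definition rich_map :: "'w set \<Rightarrow> ('w \<Rightarrow> 'w) \<Rightarrow> ('w \<Rightarrow> 'w) \<Rightarrow> ('w \<Rightarrow> 'w) \<Rightarrow> bool" where
  "rich_map W v f a = (is_map W v f a \<and>
     cycle_space (map_graph W v f a) = set_sum (Fsp W v f a) (Zsp W v f a))"

text \<open>Map-rich: isomorphic to G_M for a rich map M (maps taken on carriers in nat; every finite
  map is isomorphic to one of these).\<close>
definition map_rich :: "('v,'e) mgraph \<Rightarrow> bool" where
  "map_rich G = (\<exists>(W::nat set) v f a. rich_map W v f a \<and> mgraph_iso G (map_graph W v f a))"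

definition map_connected :: "'w set \<Rightarrow> ('w \<Rightarrow> 'w) \<Rightarrow> ('w \<Rightarrow> 'w) \<Rightarrow> ('w \<Rightarrow> 'w) \<Rightarrow> bool" where
  "map_connected W v f a = (W \<noteq> {} \<and> (\<forall>x\<in>W. \<forall>y\<in>W.
     (x, y) \<in> ({(u, v u) | u. True} \<union> {(u, f u) | u. True} \<union> {(u, a u) | u. True})\<^sup>*))"

definition euler_char :: "'w set \<Rightarrow> ('w \<Rightarrow> 'w) \<Rightarrow> ('w \<Rightarrow> 'w) \<Rightarrow> ('w \<Rightarrow> 'w) \<Rightarrow> int" where
  "euler_char W v f a = int (card (cycles2 W v a)) - int (card (squares W v f))
     + int (card (cycles2 W f a))"

definition planar_map :: "'w set \<Rightarrow> ('w \<Rightarrow> 'w) \<Rightarrow> ('w \<Rightarrow> 'w) \<Rightarrow> ('w \<Rightarrow> 'w) \<Rightarrow> bool" where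
  "planar_map W v f a = (is_map W v f a \<and> map_connected W v f a \<and> euler_char W v f a = 2)"

definition zigzag_count :: "'w set \<Rightarrow> ('w \<Rightarrow> 'w) \<Rightarrow> ('w \<Rightarrow> 'w) \<Rightarrow> ('w \<Rightarrow> 'w) \<Rightarrow> nat" where
  "zigzag_count W v f a = card (cycles2 W (diag v f) a)"

end

theory Submission
  imports Defs
begin

abbreviation sd :: "'a set \<Rightarrow> 'a set \<Rightarrow> 'a set" where
  "sd A B \<equiv> (A - B) \<union> (B - A)"

lemma card_sd: "finite A \<Longrightarrow> finite B \<Longrightarrow> card (sd A B) + 2 * card (A \<inter> B) = card A + card B"
proof -
  assume fa: "finite A" and fb: "finite B"
  have "card (sd A B) = card (A - B) + card (B - A)"
    by (rule card_Un_disjoint) (use fa fb in auto)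
  moreover have "card A = card (A - B) + card (A \<inter> B)"
  proof -
    have "A = (A - B) \<union> (A \<inter> B)" by auto
    then have "card A = card ((A - B) \<union> (A \<inter> B))" by simp
    also have "\<dots> = card (A - B) + card (A \<inter> B)" by (rule card_Un_disjoint) (use fa in auto)
    finally show ?thesis .
  qed
  moreover have "card B = card (B - A) + card (A \<inter> B)"
  proof -
    have "B = (B - A) \<union> (A \<inter> B)" by auto
    then have "card B = card ((B - A) \<union> (A \<inter> B))" by simp
    also have "\<dots> = card (B - A) + card (A \<inter> B)" by (rule card_Un_disjoint) (use fb in auto)
    finally show ?thesis .
  qed
  ultimately show ?thesis by simp
qed

lemma mgraph_ends:
  assumes "mgraph G" "e \<in> gedges G"
  shows "gends G e \<subseteq> gverts G \<and> (card (gends G e) = 1 \<or> card (gends G e) = 2)"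
  using assms unfolding mgraph_def gends_def gedges_def gverts_def by (auto split: prod.splits)

lemma mgraph_fin: "mgraph G \<Longrightarrow> finite (gverts G) \<and> finite (gedges G)"
  unfolding mgraph_def gends_def gedges_def gverts_def by (auto split: prod.splits)

lemma cob_sd:
  assumes "mgraph G"
  shows "coboundary G (sd U U') = sd (coboundary G U) (coboundary G U')"
proof -
  have *: "e \<in> coboundary G (sd U U') \<longleftrightarrow> e \<in> sd (coboundary G U) (coboundary G U')"
    if e: "e \<in> gedges G" for e
  proof -
    from mgraph_ends[OF assms e] have "card (gends G e) = 1 \<or> card (gends G e) = 2" by auto
    then show ?thesis
    proof
      assume "card (gends G e) = 1"
      then obtain p where "gends G e = {p}" by (meson card_1_singletonE)
      then show ?thesis using e unfolding coboundary_def by auto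
    next
      assume "card (gends G e) = 2"
      then obtain p q where "gends G e = {p, q}" "p \<noteq> q" by (meson card_2_iff)
      then show ?thesis using e unfolding coboundary_def by auto
    qed
  qed
  show ?thesis
  proof (rule set_eqI)
    fix e
    show "e \<in> coboundary G (sd U U') \<longleftrightarrow> e \<in> sd (coboundary G U) (coboundary G U')"
    proof (cases "e \<in> gedges G")
      case True then show ?thesis using * by blast
    next
      case False then show ?thesis unfolding coboundary_def by blast
    qed
  qed
qed

lemma cob_compl:
  assumes "mgraph G" "U \<subseteq> gverts G"
  shows "coboundary G (gverts G - U) = coboundary G U"
proof -
  have "\<forall>e\<in>gedges G. gends G e \<subseteq> gverts G" using mgraph_ends[OF assms(1)] by blast
  then show ?thesis using assms(2) unfolding coboundary_def by auto
qed

lemma cob_sub: "coboundary G U \<subseteq> gedges G"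
  unfolding coboundary_def by auto

lemma cut_sd:
  assumes "mgraph G" "A \<in> cut_space G" "B \<in> cut_space G"
  shows "sd A B \<in> cut_space G"
proof -
  obtain U U' where "A = coboundary G U" "B = coboundary G U'" "U \<subseteq> gverts G" "U' \<subseteq> gverts G"
    using assms unfolding cut_space_def by auto
  then show ?thesis unfolding cut_space_def using cob_sd[OF assms(1), of U U'] by auto
qed

lemma card_filter_sd:
  assumes "finite A" "finite B"
  shows "even (card {e \<in> sd A B. P e}) = (even (card {e\<in>A. P e}) = even (card {e\<in>B. P e}))"
proof -
  have "{e \<in> sd A B. P e} = sd {e\<in>A. P e} {e\<in>B. P e}" by auto
  moreover have "card (sd {e\<in>A. P e} {e\<in>B. P e}) + 2 * card ({e\<in>A. P e} \<inter> {e\<in>B. P e}) =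
     card {e\<in>A. P e} + card {e\<in>B. P e}"
    by (rule card_sd) (use assms in auto)
  ultimately have eq: "card {e \<in> sd A B. P e} + 2 * card ({e\<in>A. P e} \<inter> {e\<in>B. P e}) =
     card {e\<in>A. P e} + card {e\<in>B. P e}" by simp
  show ?thesis
  proof -
    define x where "x = card {e \<in> sd A B. P e}"
    define k where "k = card ({e\<in>A. P e} \<inter> {e\<in>B. P e})"
    define a where "a = card {e\<in>A. P e}"
    define b where "b = card {e\<in>B. P e}"
    have "x + 2 * k = a + b" using eq unfolding x_def k_def a_def b_def .
    then have "even x = (even a = even b)" by presburger
    then show ?thesis unfolding x_def a_def b_def .
  qed
qed

lemma sub_degree_sd:
  assumes "finite A" "finite B"
  shows "even (sub_degree G (sd A B) u) = (even (sub_degree G A u) = even (sub_degree G B u))"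
  unfolding sub_degree_def
  using card_filter_sd[OF assms, of "\<lambda>e. u \<in> gends G e"] card_filter_sd[OF assms, of "\<lambda>e. gends G e = {u}"]
  by auto

lemma cycle_sd:
  assumes "mgraph G" "A \<in> cycle_space G" "B \<in> cycle_space G"
  shows "sd A B \<in> cycle_space G"
proof -
  have f: "finite A" "finite B" using assms mgraph_fin[OF assms(1)] unfolding cycle_space_def
    by (auto intro: finite_subset)
  show ?thesis using assms sub_degree_sd[OF f, of G] unfolding cycle_space_def by auto
qed

lemma card_cut_le:
  assumes "mgraph G" "w0 \<in> gverts G"
  shows "card (cut_space G) \<le> 2 ^ (card (gverts G) - 1)"
proof -
  have fin: "finite (gverts G)" using mgraph_fin[OF assms(1)] by auto
  have "cut_space G \<subseteq> coboundary G ` Pow (gverts G - {w0})"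
  proof
    fix A assume "A \<in> cut_space G"
    then obtain U where U: "A = coboundary G U" "U \<subseteq> gverts G" unfolding cut_space_def by auto
    show "A \<in> coboundary G ` Pow (gverts G - {w0})"
    proof (cases "w0 \<in> U")
      case True
      then have "A = coboundary G (gverts G - U)" using cob_compl[OF assms(1) U(2)] U by simp
      then show ?thesis using True by auto
    next
      case False then show ?thesis using U by auto
    qed
  qed
  then have "card (cut_space G) \<le> card (coboundary G ` Pow (gverts G - {w0}))"
    by (intro card_mono) (use fin in auto)
  also have "\<dots> \<le> card (Pow (gverts G - {w0}))" by (rule card_image_le) (use fin in auto)
  also have "\<dots> = 2 ^ (card (gverts G) - 1)" using fin assms(2) by (simp add: card_Pow)
  finally show ?thesis .
qed

lemma indep_odd:
  assumes "mgraph G" "loopless G" "independent_set G S" "U \<subseteq> S" "s \<in> U"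
  shows "sub_degree G (coboundary G U) s = degree G s"
proof -
  have l: "\<And>e. e \<in> gedges G \<Longrightarrow> card (gends G e) = 2" using assms(2) unfolding loopless_def by auto
  have "{e \<in> coboundary G U. s \<in> gends G e} = {e \<in> gedges G. s \<in> gends G e}"
  proof (auto simp: coboundary_def)
    fix e assume e: "e \<in> gedges G" "s \<in> gends G e" "gends G e \<subseteq> U"
    then obtain p q where pq: "gends G e = {p, q}" "p \<noteq> q" using l[OF e(1)] by (meson card_2_iff)
    then have "adjacent G p q" using e unfolding adjacent_def by auto
    moreover have "p \<in> S" "q \<in> S" using e pq assms(4) by auto
    ultimately show False using assms(3) unfolding independent_set_def by auto
  qed (use assms(5) in auto)
  moreover have "{e \<in> coboundary G U. gends G e = {s}} = {}" "{e \<in> gedges G. gends G e = {s}} = {}"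
    using l unfolding coboundary_def by fastforce+
  ultimately show ?thesis unfolding degree_def sub_degree_def by (metis (no_types, lifting))
qed

lemma indep_cycle_empty:
  assumes "mgraph G" "loopless G" "independent_set G S" "U \<subseteq> S"
    "\<forall>u\<in>S. odd (degree G u)" "coboundary G U \<in> cycle_space G"
  shows "U = {}"
proof (rule ccontr)
  assume "U \<noteq> {}"
  then obtain s where s: "s \<in> U" by auto
  then have "s \<in> gverts G" using assms(3,4) unfolding independent_set_def by auto
  then have "even (sub_degree G (coboundary G U) s)" using assms(6) unfolding cycle_space_def by auto
  then show False using indep_odd[OF assms(1-4) s] assms(5) assms(4) s by auto
qed

lemma vs_gf2: "vector_space (\<lambda>(c::bit) (g::'e \<Rightarrow> bit). (\<lambda>x. c * g x))"
  by unfold_locales (auto simp: fun_eq_iff algebra_simps)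

lemma bit_ind_sd: "bit_ind (sd A B) = bit_ind A + bit_ind B"
  by (auto simp: fun_eq_iff bit_ind_def)

lemma bit_ind_empty: "bit_ind {} = 0"
  by (auto simp: fun_eq_iff bit_ind_def)

lemma bit_ind_inj: "inj bit_ind"
proof (rule injI)
  fix A B :: "'a set" assume "bit_ind A = bit_ind B"
  then have "\<And>x. (x \<in> A) = (x \<in> B)" unfolding bit_ind_def by (metis zero_neq_one)
  then show "A = B" by auto
qed

lemma sum_fun_app: "(\<Sum>v\<in>A. f v) (x::'a) = (\<Sum>v\<in>A. (f v x :: 'b::comm_monoid_add))"
  by (induction A rule: infinite_finite_induct) auto

lemma bit_double: "(y::bit) + y = 0"
  by (cases y) auto

lemma sum_closed:
  assumes "{} \<in> W" "\<And>A B. A \<in> W \<Longrightarrow> B \<in> W \<Longrightarrow> sd A B \<in> W" "finite X" "X \<subseteq> bit_ind ` W"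
  shows "sum id X \<in> bit_ind ` W"
  using assms(3,4)
proof (induction X rule: finite_induct)
  case empty
  then show ?case using assms(1) bit_ind_empty by (metis image_eqI sum.empty)
next
  case (insert x F)
  then obtain A B where "x = bit_ind A" "A \<in> W" "sum id F = bit_ind B" "B \<in> W" by auto
  then have "sum id (insert x F) = bit_ind (sd A B)" using insert by (simp add: bit_ind_sd)
  then show ?case using assms(2) \<open>A \<in> W\<close> \<open>B \<in> W\<close> by auto
qed

lemma dim_card:
  assumes "finite W" "{} \<in> W" "\<And>A B. A \<in> W \<Longrightarrow> B \<in> W \<Longrightarrow> sd A B \<in> W"
  shows "2 ^ gf2_dim W \<le> card W"
proof -
  interpret VS: vector_space "\<lambda>(c::bit) (g::'e \<Rightarrow> bit). (\<lambda>x. c * g x)" by (rule vs_gf2)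
  obtain b where b: "b \<subseteq> bit_ind ` W" "VS.independent b" "card b = VS.dim (bit_ind ` W)"
    using VS.basis_exists by metis
  have fb: "finite b" using b(1) assms(1) finite_subset by blast
  have dim: "gf2_dim W = card b" using b(3) unfolding gf2_dim_def by simp
  have inj: "inj_on (sum id) (Pow b)"
  proof (rule inj_onI)
    fix A A' assume A: "A \<in> Pow b" and A': "A' \<in> Pow b" and eq: "sum id A = sum id A'"
    define u where "u v = (if v \<in> A then 1 else 0) + (if v \<in> A' then 1 else (0::bit))" for v
    have "(\<Sum>v\<in>b. (\<lambda>x. u v * v x)) = 0"
    proof (rule ext)
      fix x
      have "(\<Sum>v\<in>b. (\<lambda>x. u v * v x)) x = (\<Sum>v\<in>b. u v * v x)" by (rule sum_fun_app)
      also have "\<dots> = (\<Sum>v\<in>b. (if v \<in> A then v x else 0)) + (\<Sum>v\<in>b. (if v \<in> A' then v x else 0))"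
      proof -
        have h: "\<And>v. u v * v x = (if v \<in> A then v x else 0) + (if v \<in> A' then v x else 0)"
          by (case_tac "v \<in> A"; case_tac "v \<in> A'") (simp_all add: u_def bit_double)
        show ?thesis by (simp only: h sum.distrib)
      qed
      also have "\<dots> = (\<Sum>v\<in>A. v x) + (\<Sum>v\<in>A'. v x)"
        using A A' fb by (simp add: sum.If_cases Int_absorb1)
      also have "\<dots> = sum id A x + sum id A' x" by (simp add: sum_fun_app)
      also have "\<dots> = 0" using eq bit_double by simp
      finally show "(\<Sum>v\<in>b. (\<lambda>x. u v * v x)) x = 0 x" by simp
    qed
    then have "\<forall>v\<in>b. u v = 0" using VS.independentD[OF b(2) fb subset_refl] by blast
    then have "\<forall>v\<in>b. (v \<in> A) = (v \<in> A')" unfolding u_def by (auto split: if_splits)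
    then show "A = A'" using A A' by auto
  qed
  have "sum id ` Pow b \<subseteq> bit_ind ` W"
  proof
    fix y assume "y \<in> sum id ` Pow b"
    then obtain X where X: "X \<subseteq> b" "y = sum id X" by auto
    have "finite X" using X(1) fb by (rule finite_subset)
    moreover have "X \<subseteq> bit_ind ` W" using X(1) b(1) by (rule subset_trans)
    ultimately show "y \<in> bit_ind ` W" using sum_closed[OF assms(2,3)] X(2) by blast
  qed
  then have "card (sum id ` Pow b) \<le> card (bit_ind ` W)" by (intro card_mono) (use assms(1) in auto)
  also have "\<dots> \<le> card W" by (rule card_image_le[OF assms(1)])
  finally have "card (Pow b) \<le> card W" using card_image[OF inj] by simp
  then show ?thesis using dim fb by (simp add: card_Pow)
qed

lemma indep_number:
  assumes "mgraph G"
  obtains S where "independent_set G S" "independence_number G = card S"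
proof -
  have fin: "finite (gverts G)" using mgraph_fin[OF assms] by auto
  let ?K = "{card S | S. independent_set G S}"
  have "?K \<subseteq> {0..card (gverts G)}"
  proof
    fix k assume "k \<in> ?K"
    then obtain S where "k = card S" "S \<subseteq> gverts G" unfolding independent_set_def by auto
    then show "k \<in> {0..card (gverts G)}" using card_mono[OF fin] by auto
  qed
  then have fK: "finite ?K" by (rule finite_subset) auto
  have "independent_set G {}" unfolding independent_set_def by simp
  then have "?K \<noteq> {}" by blast
  then have "Max ?K \<in> ?K" using fK by (intro Max_in) auto
  then obtain S where "independent_set G S" "Max ?K = card S" by auto
  then show ?thesis using that unfolding independence_number_def by simp
qed

lemma indep_fin: "mgraph G \<Longrightarrow> independent_set G S \<Longrightarrow> finite S"
  using mgraph_fin[of G] finite_subset[of S "gverts G"] unfolding independent_set_def by simp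

lemma part1:
  assumes mg: "mgraph G" and con: "gconnected G" and ll: "loopless G"
    and odd: "\<forall>u\<in>gverts G. odd (degree G u)"
  shows "independence_number G + gf2_dim (bicycle_space G) + 1 \<le> card (gverts G)"
proof -
  obtain S where S: "independent_set G S" "independence_number G = card S"
    using indep_number[OF mg] by metis
  have fin: "finite (gverts G)" "finite (gedges G)" using mgraph_fin[OF mg] by auto
  obtain w0 where w0: "w0 \<in> gverts G" using con unfolding gconnected_def by auto
  let ?B = "bicycle_space G"
  have finB: "finite ?B"
  proof -
    have "?B \<subseteq> Pow (gedges G)" unfolding bicycle_space_def cycle_space_def by auto
    then show ?thesis using fin finite_subset by blast
  qed
  have eB: "{} \<in> ?B"
  proof -
    have "coboundary G {} = {}" unfolding coboundary_def by auto
    then have "{} \<in> cut_space G" unfolding cut_space_def by (metis (mono_tags, lifting) empty_subsetI mem_Collect_eq)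
    moreover have "{} \<in> cycle_space G" unfolding cycle_space_def sub_degree_def by auto
    ultimately show ?thesis unfolding bicycle_space_def by auto
  qed
  have sdB: "sd A B \<in> ?B" if "A \<in> ?B" "B \<in> ?B" for A B
    using that cut_sd[OF mg] cycle_sd[OF mg] unfolding bicycle_space_def by auto
  have d: "2 ^ gf2_dim ?B \<le> card ?B" by (rule dim_card[OF finB eB sdB])
  have finS: "finite S" using indep_fin[OF mg S(1)] .
  have Sv: "S \<subseteq> gverts G" using S(1) unfolding independent_set_def by auto
  define h where "h p = sd (fst p) (coboundary G (snd p))" for p
  have inj: "inj_on h (?B \<times> Pow S)"
  proof (rule inj_onI)
    fix p q assume p: "p \<in> ?B \<times> Pow S" and q: "q \<in> ?B \<times> Pow S" and eq: "h p = h q"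
    obtain b U b' U' where pq: "p = (b, U)" "q = (b', U')" by (cases p, cases q)
    have "sd b b' = sd (coboundary G U) (coboundary G U')" using eq unfolding h_def pq by auto
    then have e1: "sd b b' = coboundary G (sd U U')" using cob_sd[OF mg] by simp
    have "sd b b' \<in> cycle_space G" using sdB p q pq unfolding bicycle_space_def by auto
    moreover have "sd U U' \<subseteq> S" using p q pq by auto
    moreover have "\<forall>u\<in>S. odd (degree G u)" using odd Sv by auto
    ultimately have "sd U U' = {}"
      using indep_cycle_empty[OF mg ll S(1), of "sd U U'"] e1 by simp
    then have "U = U'" by auto
    then have "b = b'" using eq unfolding h_def pq by auto
    then show "p = q" using pq \<open>U = U'\<close> by simp
  qed
  have img: "h ` (?B \<times> Pow S) \<subseteq> cut_space G"
  proof
    fix x assume "x \<in> h ` (?B \<times> Pow S)"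
    then obtain b U where bU: "b \<in> ?B" "U \<subseteq> S" "x = sd b (coboundary G U)" unfolding h_def by auto
    have "coboundary G U \<in> cut_space G" using bU Sv unfolding cut_space_def by auto
    then show "x \<in> cut_space G" using bU cut_sd[OF mg] unfolding bicycle_space_def by auto
  qed
  have "card ?B * 2 ^ card S = card (?B \<times> Pow S)" using finS finB by (simp add: card_cartesian_product card_Pow)
  also have "\<dots> = card (h ` (?B \<times> Pow S))" using card_image[OF inj] by simp
  also have "\<dots> \<le> card (cut_space G)"
  proof (rule card_mono[OF _ img])
    have "cut_space G \<subseteq> Pow (gedges G)" unfolding cut_space_def using cob_sub[of G] by auto
    then show "finite (cut_space G)" using fin finite_subset by blast
  qed
  also have "\<dots> \<le> 2 ^ (card (gverts G) - 1)" by (rule card_cut_le[OF mg w0])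
  finally have "2 ^ gf2_dim ?B * 2 ^ card S \<le> (2::nat) ^ (card (gverts G) - 1)"
    using d by (meson le_trans mult_le_mono1)
  then have "2 ^ (gf2_dim ?B + card S) \<le> (2::nat) ^ (card (gverts G) - 1)" by (simp add: power_add)
  then have "gf2_dim ?B + card S \<le> card (gverts G) - 1" using power_increasing_iff[of "2::nat"] by simp
  moreover have "card (gverts G) \<ge> 1" using fin w0 by (metis One_nat_def Suc_leI card_gt_0_iff empty_iff)
  ultimately show ?thesis using S(2) by linarith
qed

section \<open>Orbits\<close>

lemma orb_self: "x \<in> orb2 p q x"
  unfolding orb2_def by auto

lemma orb_step:
  assumes "y \<in> orb2 p q x"
  shows "p y \<in> orb2 p q x" "q y \<in> orb2 p q x"
proof -
  have "(x, y) \<in> ({(u, p u) | u. True} \<union> {(u, q u) | u. True})\<^sup>*" using assms unfolding orb2_def by auto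
  then have "(x, p y) \<in> ({(u, p u) | u. True} \<union> {(u, q u) | u. True})\<^sup>*"
    "(x, q y) \<in> ({(u, p u) | u. True} \<union> {(u, q u) | u. True})\<^sup>*"
    by (auto intro: rtrancl_into_rtrancl)
  then show "p y \<in> orb2 p q x" "q y \<in> orb2 p q x" unfolding orb2_def by auto
qed

lemma orb_min:
  assumes "x \<in> X" "\<And>y. y \<in> X \<Longrightarrow> p y \<in> X" "\<And>y. y \<in> X \<Longrightarrow> q y \<in> X"
  shows "orb2 p q x \<subseteq> X"
proof
  fix y assume "y \<in> orb2 p q x"
  then have "(x, y) \<in> ({(u, p u) | u. True} \<union> {(u, q u) | u. True})\<^sup>*" unfolding orb2_def by auto
  then show "y \<in> X"
    by (induction rule: rtrancl_induct) (use assms in auto)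
qed

lemma orb_trans:
  assumes "y \<in> orb2 p q x"
  shows "orb2 p q y \<subseteq> orb2 p q x"
  by (rule orb_min[OF assms]) (auto intro: orb_step)

lemma orb_sym:
  assumes p: "\<forall>x\<in>W. p x \<in> W \<and> p (p x) = x" and q: "\<forall>x\<in>W. q x \<in> W \<and> q (q x) = x"
    and x: "x \<in> W" and y: "y \<in> orb2 p q x"
  shows "x \<in> orb2 p q y \<and> y \<in> W"
proof -
  let ?X = "{y \<in> W. x \<in> orb2 p q y}"
  have "x \<in> ?X" using x orb_self by auto
  moreover have "p y \<in> ?X" if "y \<in> ?X" for y
  proof -
    have "y \<in> orb2 p q (p y)" using orb_step(1)[OF orb_self[of "p y" p q]] p that by auto
    then have "orb2 p q y \<subseteq> orb2 p q (p y)" by (rule orb_trans)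
    then show ?thesis using that p by auto
  qed
  moreover have "q y \<in> ?X" if "y \<in> ?X" for y
  proof -
    have "y \<in> orb2 p q (q y)" using orb_step(2)[OF orb_self[of "q y" p q]] q that by auto
    then have "orb2 p q y \<subseteq> orb2 p q (q y)" by (rule orb_trans)
    then show ?thesis using that q by auto
  qed
  ultimately have "orb2 p q x \<subseteq> ?X" by (rule orb_min)
  then show ?thesis using y by auto
qed

locale invs =
  fixes W :: "'w set" and p q :: "'w \<Rightarrow> 'w"
  assumes p: "\<forall>x\<in>W. p x \<in> W \<and> p (p x) = x" and q: "\<forall>x\<in>W. q x \<in> W \<and> q (q x) = x"
begin

lemma orbW: "x \<in> W \<Longrightarrow> orb2 p q x \<subseteq> W"
  by (rule orb_min) (use p q in auto)

lemma orb_eq: "x \<in> W \<Longrightarrow> y \<in> orb2 p q x \<Longrightarrow> orb2 p q y = orb2 p q x"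
  using orb_sym[OF p q] orb_trans by (metis subset_antisym)

lemma orb_disj: "x \<in> W \<Longrightarrow> y \<in> W \<Longrightarrow> z \<in> orb2 p q x \<Longrightarrow> z \<in> orb2 p q y \<Longrightarrow> orb2 p q x = orb2 p q y"
  using orb_eq by metis

lemma orb_iff: "x \<in> W \<Longrightarrow> y \<in> W \<Longrightarrow> (orb2 p q x = orb2 p q y) = (x \<in> orb2 p q y)"
  using orb_eq orb_self by metis

end

lemma fpf_invs: "fpf_involution W p \<Longrightarrow> fpf_involution W q \<Longrightarrow> invs W p q"
  unfolding fpf_involution_def invs_def by auto

lemma even_inv:
  assumes "finite Y" "\<forall>y\<in>Y. p y \<in> Y \<and> p y \<noteq> y \<and> p (p y) = y"
  shows "even (card Y)"
  using assms
proof (induction "card Y" arbitrary: Y rule: less_induct)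
  case less
  show ?case
  proof (cases "Y = {}")
    case True then show ?thesis by simp
  next
    case False
    then obtain y where y: "y \<in> Y" by auto
    let ?Y = "Y - {y, p y}"
    have py: "p y \<in> Y" "p y \<noteq> y" using less.prems(2) y by auto
    have sub: "{y, p y} \<subseteq> Y" using py y by auto
    have c2: "card {y, p y} = 2" using py(2) by simp
    have "card ?Y = card Y - card {y, p y}" by (rule card_Diff_subset) (use sub in auto)
    moreover have "card {y, p y} \<le> card Y" by (rule card_mono[OF less.prems(1) sub])
    ultimately have c: "card Y = card ?Y + 2" using c2 by simp
    have "\<forall>u\<in>?Y. p u \<in> ?Y \<and> p u \<noteq> u \<and> p (p u) = u"
    proof
      fix u assume u: "u \<in> ?Y"
      then have u1: "u \<in> Y" "u \<noteq> y" "u \<noteq> p y" by auto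
      have pu: "p u \<in> Y" "p u \<noteq> u" "p (p u) = u" using less.prems(2) u1(1) by auto
      have "p u \<noteq> y" using pu(3) u1(3) by auto
      moreover have "p u \<noteq> p y"
      proof
        assume "p u = p y"
        then have "p (p u) = p (p y)" by simp
        then show False using pu(3) less.prems(2) y u1(2) by auto
      qed
      ultimately show "p u \<in> ?Y \<and> p u \<noteq> u \<and> p (p u) = u" using pu by auto
    qed
    moreover have "card ?Y < card Y" using c by simp
    moreover have "finite ?Y" using less.prems(1) by simp
    ultimately have "even (card ?Y)" using less(1) by blast
    then show ?thesis using c by simp
  qed
qed

locale imap =
  fixes W :: "'w set" and g h a :: "'w \<Rightarrow> 'w"
  assumes fin: "finite W" and ig: "fpf_involution W g" and ih: "fpf_involution W h"
    and ia: "fpf_involution W a" and comm: "\<forall>x\<in>W. g (h x) = h (g x)" and ne: "\<forall>x\<in>W. g x \<noteq> h x"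
begin

sublocale gh: invs W g h using fpf_invs[OF ig ih] .
sublocale ga: invs W g a using fpf_invs[OF ig ia] .

lemma gW: "x \<in> W \<Longrightarrow> g x \<in> W" and hW: "x \<in> W \<Longrightarrow> h x \<in> W" and aW: "x \<in> W \<Longrightarrow> a x \<in> W"
  and gg: "x \<in> W \<Longrightarrow> g (g x) = x" and hh: "x \<in> W \<Longrightarrow> h (h x) = x" and aa: "x \<in> W \<Longrightarrow> a (a x) = x"
  and gn: "x \<in> W \<Longrightarrow> g x \<noteq> x" and hn: "x \<in> W \<Longrightarrow> h x \<noteq> x" and an: "x \<in> W \<Longrightarrow> a x \<noteq> x"
  using ig ih ia unfolding fpf_involution_def by auto

lemma sq_eq: assumes x: "x \<in> W" shows "orb2 g h x = {x, g x, h x, g (h x)}"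
proof
  have "x \<in> orb2 g h x" by (rule orb_self)
  then have "g x \<in> orb2 g h x" "h x \<in> orb2 g h x" by (rule orb_step)+
  then have "g (h x) \<in> orb2 g h x" using \<open>h x \<in> orb2 g h x\<close> by (rule_tac orb_step)
  then show "{x, g x, h x, g (h x)} \<subseteq> orb2 g h x" using \<open>x \<in> orb2 g h x\<close> \<open>g x \<in> orb2 g h x\<close> \<open>h x \<in> orb2 g h x\<close> by auto
  show "orb2 g h x \<subseteq> {x, g x, h x, g (h x)}"
  proof (rule orb_min)
    fix y assume "y \<in> {x, g x, h x, g (h x)}"
    then show "g y \<in> {x, g x, h x, g (h x)}" "h y \<in> {x, g x, h x, g (h x)}"
      using x gg hh gW hW comm by auto
  qed simp
qed

lemma sq_distinct: assumes x: "x \<in> W"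
  shows "x \<noteq> g x" "x \<noteq> h x" "x \<noteq> g (h x)" "g x \<noteq> h x" "g x \<noteq> g (h x)" "h x \<noteq> g (h x)"
proof -
  show "x \<noteq> g x" using gn x by metis
  show "x \<noteq> h x" using hn x by metis
  show "g x \<noteq> h x" using ne x by auto
  show "h x \<noteq> g (h x)" using gn hW x by metis
  show "g x \<noteq> g (h x)" using gg hW x hn by metis
  show "x \<noteq> g (h x)" using gg hW x ne by metis
qed

abbreviation Gm where "Gm \<equiv> map_graph W g h a"

lemma Gm_simps: "gverts Gm = orb2 g a ` W" "gedges Gm = orb2 g h ` W" "gends Gm = (\<lambda>S. orb2 g a ` S)"
  unfolding map_graph_def gverts_def gedges_def gends_def cycles2_def squares_def by auto

lemma ends_sq: assumes x: "x \<in> W"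
  shows "gends Gm (orb2 g h x) = {orb2 g a x, orb2 g a (h x)}"
proof -
  have "orb2 g a (g x) = orb2 g a x" using ga.orb_eq[OF x] orb_step orb_self by metis
  moreover have "orb2 g a (g (h x)) = orb2 g a (h x)" using ga.orb_eq[OF hW[OF x]] orb_step orb_self by metis
  ultimately show ?thesis unfolding Gm_simps sq_eq[OF x] by auto
qed

lemma mgraph_Gm: "mgraph Gm"
proof -
  have "finite (gverts Gm)" "finite (gedges Gm)" unfolding Gm_simps using fin by auto
  moreover have "gends Gm e \<subseteq> gverts Gm \<and> (card (gends Gm e) = 1 \<or> card (gends Gm e) = 2)"
    if e: "e \<in> gedges Gm" for e
  proof -
    obtain x where x: "x \<in> W" "e = orb2 g h x" using e Gm_simps(2) by auto
    show ?thesis unfolding x(2) ends_sq[OF x(1)] using x(1) hW[OF x(1)]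
      by (cases "orb2 g a x = orb2 g a (h x)") (auto simp: Gm_simps)
  qed
  ultimately show ?thesis unfolding mgraph_def gverts_def gedges_def gends_def map_graph_def
    by (auto split: prod.splits)
qed

end

lemma card_filter_sum: "finite A \<Longrightarrow> card {y \<in> A. P y} = (\<Sum>y\<in>A. if P y then 1 else 0)"
proof -
  assume f: "finite A"
  have "card {y \<in> A. P y} = (\<Sum>y\<in>{y \<in> A. P y}. (1::nat))" by simp
  also have "\<dots> = (\<Sum>y\<in>A. if P y then 1 else 0)" by (rule sum.inter_filter[OF f])
  finally show ?thesis .
qed

lemma card4:
  assumes "a \<noteq> b" "a \<noteq> c" "a \<noteq> d" "b \<noteq> c" "b \<noteq> d" "c \<noteq> d"
  shows "card {y \<in> {a, b, c, d}. P y} = (if P a then 1 else 0) + (if P b then 1 else 0) + (if P c then 1 else 0) + (if P d then 1 else 0)"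
  using assms by (subst card_filter_sum) simp_all

lemma sum_if21: "finite A \<Longrightarrow> (\<Sum>q\<in>A. if P q then 2 else 1) = card A + card {q \<in> A. P q}"
proof -
  assume f: "finite A"
  have "(\<Sum>q\<in>A. if P q then 2 else (1::nat)) = (\<Sum>q\<in>A. 1 + (if P q then 1 else 0))"
    by (rule sum.cong) auto
  also have "\<dots> = card A + (\<Sum>q\<in>A. if P q then 1 else 0)" unfolding sum.distrib by simp
  also have "\<dots> = card A + card {q \<in> A. P q}" using card_filter_sum[OF f, of P] by simp
  finally show ?thesis .
qed

context imap begin

abbreviation Pd where "Pd X x \<equiv> ((x \<in> X) = (g x \<notin> X))"

lemma Pd_g: "x \<in> W \<Longrightarrow> Pd X (g x) = Pd X x"
  using gg by auto

lemma sq_const: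
  assumes wd: "\<forall>x\<in>W. Pd X (h x) = Pd X x" and x: "x \<in> W" and y: "y \<in> orb2 g h x"
  shows "Pd X y = Pd X x"
proof -
  have "y \<in> {x, g x, h x, g (h x)}" using y sq_eq[OF x] by simp
  moreover have "Pd X (g x) = Pd X x" using Pd_g[OF x] .
  moreover have "Pd X (h x) = Pd X x" using wd x by auto
  moreover have "Pd X (g (h x)) = Pd X (h x)" using Pd_g[OF hW[OF x]] .
  ultimately show ?thesis by auto
qed

lemma inO:
  assumes y0: "y0 \<in> W" and x: "x \<in> W"
  shows "(orb2 g a x = orb2 g a y0) = (x \<in> orb2 g a y0)"
  using ga.orb_iff[OF x y0] .

lemma orb_ga_g: "x \<in> W \<Longrightarrow> orb2 g a (g x) = orb2 g a x"
  using ga.orb_eq orb_step(1) orb_self by metis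

lemma per_square:
  assumes wd: "\<forall>x\<in>W. Pd X (h x) = Pd X x" and x: "x \<in> W" and P: "Pd X x"
    and y0: "y0 \<in> W"
    and Oin: "orb2 g a y0 \<in> gends Gm (orb2 g h x)"
  shows "card ({y \<in> orb2 g a y0. y \<in> X \<and> Pd X y} \<inter> orb2 g h x)
         = (if gends Gm (orb2 g h x) = {orb2 g a y0} then 2 else 1)"
proof -
  let ?O = "orb2 g a y0"
  have hx: "h x \<in> W" using hW[OF x] .
  have e1: "({y \<in> ?O. y \<in> X \<and> Pd X y} \<inter> orb2 g h x) = {y \<in> {x, g x, h x, g (h x)}. y \<in> ?O \<and> y \<in> X}"
    using sq_const[OF wd x] sq_eq[OF x] P by auto
  have d: "x \<noteq> g x" "x \<noteq> h x" "x \<noteq> g (h x)" "g x \<noteq> h x" "g x \<noteq> g (h x)" "h x \<noteq> g (h x)"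
    using sq_distinct[OF x] by auto
  have o1: "(g x \<in> ?O) = (x \<in> ?O)"
    using inO[OF y0 x] inO[OF y0 gW[OF x]] orb_ga_g[OF x] by simp
  have o2: "(g (h x) \<in> ?O) = (h x \<in> ?O)"
    using inO[OF y0 hx] inO[OF y0 gW[OF hx]] orb_ga_g[OF hx] by simp
  have p1: "(g x \<in> X) = (x \<notin> X)" using P by auto
  have p2: "(g (h x) \<in> X) = (h x \<notin> X)" using wd x P by auto
  have en: "gends Gm (orb2 g h x) = {orb2 g a x, orb2 g a (h x)}" by (rule ends_sq[OF x])
  have i1: "(orb2 g a x = ?O) = (x \<in> ?O)" using inO[OF y0 x] .
  have i2: "(orb2 g a (h x) = ?O) = (h x \<in> ?O)" using inO[OF y0 hx] .
  have c: "card {y \<in> {x, g x, h x, g (h x)}. y \<in> ?O \<and> y \<in> X} =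
    (if x \<in> ?O \<and> x \<in> X then 1 else 0) + (if g x \<in> ?O \<and> g x \<in> X then 1 else 0)
    + (if h x \<in> ?O \<and> h x \<in> X then 1 else 0) + (if g (h x) \<in> ?O \<and> g (h x) \<in> X then 1 else 0)"
    by (rule card4) (use d in auto)
  have or: "x \<in> ?O \<or> h x \<in> ?O" using Oin en i1 i2 by auto
  have eq: "(gends Gm (orb2 g h x) = {?O}) = (x \<in> ?O \<and> h x \<in> ?O)"
  proof
    assume "gends Gm (orb2 g h x) = {?O}"
    then have "orb2 g a x = ?O" "orb2 g a (h x) = ?O" using en by auto
    then show "x \<in> ?O \<and> h x \<in> ?O" using i1 i2 by auto
  next
    assume "x \<in> ?O \<and> h x \<in> ?O"
    then have "orb2 g a x = ?O" "orb2 g a (h x) = ?O" using i1 i2 by auto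
    then show "gends Gm (orb2 g h x) = {?O}" using en by auto
  qed
  show ?thesis unfolding e1 c eq o1 o2 p1 p2 using or by auto
qed

end

context imap begin

lemma L:
  assumes aX: "\<forall>x\<in>W. (a x \<in> X) = (x \<in> X)" and wd: "\<forall>x\<in>W. Pd X (h x) = Pd X x"
  shows "{q \<in> gedges Gm. \<forall>y\<in>q. Pd X y} \<in> cycle_space Gm"
proof -
  define A where "A = {q \<in> gedges Gm. \<forall>y\<in>q. Pd X y}"
  have inA: "(orb2 g h x \<in> A) = Pd X x" if x: "x \<in> W" for x
  proof
    assume "orb2 g h x \<in> A"
    then have "\<forall>y\<in>orb2 g h x. Pd X y" unfolding A_def by simp
    then show "Pd X x" using orb_self[of x g h] by (rule bspec)
  next
    assume "Pd X x"
    then show "orb2 g h x \<in> A" unfolding A_def Gm_simps using sq_const[OF wd x] x by auto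
  qed
  have finA: "finite A" unfolding A_def Gm_simps using fin by auto
  have "even (sub_degree Gm A Ov)" if Ov: "Ov \<in> gverts Gm" for Ov
  proof -
    obtain y0 where y0: "y0 \<in> W" "Ov = orb2 g a y0" using Ov unfolding Gm_simps by auto
    have OW: "Ov \<subseteq> W" using ga.orbW[OF y0(1)] y0(2) by simp
    have finO: "finite Ov" using OW fin finite_subset by blast
    define F where "F = {y \<in> Ov. y \<in> X \<and> Pd X y}"
    define OX where "OX = {y \<in> Ov. y \<in> X}"
    define N where "N = {y \<in> Ov. y \<in> X \<and> \<not> Pd X y}"
    have eOX: "even (card OX)"
    proof (rule even_inv[of _ a])
      show "finite OX" unfolding OX_def using finO by simp
      show "\<forall>y\<in>OX. a y \<in> OX \<and> a y \<noteq> y \<and> a (a y) = y"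
      proof
        fix y assume y: "y \<in> OX"
        then have yW: "y \<in> W" using OW unfolding OX_def by auto
        have "a y \<in> Ov" using y orb_step(2) y0(2) unfolding OX_def by auto
        moreover have "a y \<in> X" using y aX yW unfolding OX_def by auto
        ultimately show "a y \<in> OX \<and> a y \<noteq> y \<and> a (a y) = y" using an[OF yW] aa[OF yW] unfolding OX_def by auto
      qed
    qed
    have eN: "even (card N)"
    proof (rule even_inv[of _ g])
      show "finite N" unfolding N_def using finO by simp
      show "\<forall>y\<in>N. g y \<in> N \<and> g y \<noteq> y \<and> g (g y) = y"
      proof
        fix y assume y: "y \<in> N"
        then have yW: "y \<in> W" using OW unfolding N_def by auto
        have "g y \<in> Ov" using y orb_step(1) y0(2) unfolding N_def by auto
        moreover have "g y \<in> X" using y unfolding N_def by auto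
        moreover have "\<not> Pd X (g y)" using y Pd_g[OF yW] unfolding N_def by auto
        ultimately show "g y \<in> N \<and> g y \<noteq> y \<and> g (g y) = y" using gn[OF yW] gg[OF yW] unfolding N_def by auto
      qed
    qed
    have FON: "F = OX - N" "N \<subseteq> OX" unfolding F_def OX_def N_def by auto
    have cF: "card F = card OX - card N" unfolding FON(1) by (rule card_Diff_subset) (use finO FON(2) in \<open>auto simp: OX_def intro: finite_subset\<close>)
    have "card N \<le> card OX" by (rule card_mono) (use finO FON(2) in \<open>auto simp: OX_def\<close>)
    then have evF: "even (card F)" using cF eOX eN by auto
    define A1 where "A1 = {q \<in> A. Ov \<in> gends Gm q}"
    have finA1: "finite A1" unfolding A1_def using finA by simp
    have FU: "F = (\<Union>q\<in>A1. F \<inter> q)"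
    proof
      show "F \<subseteq> (\<Union>q\<in>A1. F \<inter> q)"
      proof
        fix x assume x: "x \<in> F"
        then have xW: "x \<in> W" using OW unfolding F_def by auto
        have "orb2 g h x \<in> A" using inA[OF xW] x unfolding F_def by auto
        moreover have "orb2 g a x \<in> gends Gm (orb2 g h x)" using ends_sq[OF xW] by auto
        moreover have "orb2 g a x = Ov" using inO[OF y0(1) xW] x y0(2) unfolding F_def by auto
        ultimately have "orb2 g h x \<in> A1" unfolding A1_def by auto
        moreover have "x \<in> F \<inter> orb2 g h x" using x orb_self[of x g h] by simp
        ultimately show "x \<in> (\<Union>q\<in>A1. F \<inter> q)" by (rule UN_I)
      qed
    qed auto
    have "card F = (\<Sum>q\<in>A1. card (F \<inter> q))"
    proof -
      have "card (\<Union>q\<in>A1. F \<inter> q) = (\<Sum>q\<in>A1. card (F \<inter> q))"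
      proof (rule card_UN_disjoint[OF finA1])
        show "\<forall>q\<in>A1. finite (F \<inter> q)" using finO unfolding F_def by auto
        show "\<forall>i\<in>A1. \<forall>j\<in>A1. i \<noteq> j \<longrightarrow> F \<inter> i \<inter> (F \<inter> j) = {}"
        proof (intro ballI impI)
          fix i j assume i: "i \<in> A1" and j: "j \<in> A1" and ij: "i \<noteq> j"
          obtain xi where xi: "xi \<in> W" "i = orb2 g h xi" using i unfolding A1_def A_def Gm_simps by auto
          obtain xj where xj: "xj \<in> W" "j = orb2 g h xj" using j unfolding A1_def A_def Gm_simps by auto
          show "F \<inter> i \<inter> (F \<inter> j) = {}" using gh.orb_disj[OF xi(1) xj(1)] xi(2) xj(2) ij by auto
        qed
      qed
      then show ?thesis using FU by simp
    qed
    also have "\<dots> = (\<Sum>q\<in>A1. if gends Gm q = {Ov} then 2 else 1)"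
    proof (rule sum.cong[OF refl])
      fix q assume q: "q \<in> A1"
      obtain x where x: "x \<in> W" "q = orb2 g h x" using q unfolding A1_def A_def Gm_simps by auto
      have P: "Pd X x" using inA[OF x(1)] q x(2) unfolding A1_def by auto
      have "Ov \<in> gends Gm q" using q unfolding A1_def by auto
      then show "card (F \<inter> q) = (if gends Gm q = {Ov} then 2 else 1)"
        using per_square[OF wd x(1) P y0(1)] x(2) y0(2) unfolding F_def by simp
    qed
    also have "\<dots> = card A1 + card {q \<in> A1. gends Gm q = {Ov}}" by (rule sum_if21[OF finA1])
    also have "\<dots> = sub_degree Gm A Ov"
    proof -
      have "{q \<in> A1. gends Gm q = {Ov}} = {q \<in> A. gends Gm q = {Ov}}" unfolding A1_def by auto
      then show ?thesis unfolding sub_degree_def A1_def by simp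
    qed
    finally show ?thesis using evF by simp
  qed
  moreover have "A \<subseteq> gedges Gm" unfolding A_def by auto
  ultimately show ?thesis unfolding cycle_space_def A_def by auto
qed

end

lemma three_in_two:
  assumes "finite S" "card S \<le> 2" "a \<in> S" "b \<in> S" "c \<in> S"
  shows "a = b \<or> a = c \<or> b = c"
proof (rule ccontr)
  assume "\<not> (a = b \<or> a = c \<or> b = c)"
  then have "card {a, b, c} = 3" by simp
  moreover have "card {a, b, c} \<le> card S" using assms by (intro card_mono) auto
  ultimately show False using assms(2) by simp
qed

lemma cycle_card_le:
  assumes mg: "mgraph H" and con: "gconnected H"
  shows "card (cycle_space H) \<le> 2 ^ (card (gedges H) - (card (gverts H) - 1))"
proof -
  define V where "V = gverts H"
  define E where "E = gedges H"
  have finV: "finite V" and finE: "finite E" using mgraph_fin[OF mg] unfolding V_def E_def by auto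
  have ends: "\<And>e. e \<in> E \<Longrightarrow> gends H e \<subseteq> V \<and> finite (gends H e) \<and> card (gends H e) \<le> 2"
  proof -
    fix e assume e: "e \<in> E"
    then have "gends H e \<subseteq> V \<and> (card (gends H e) = 1 \<or> card (gends H e) = 2)"
      using mgraph_ends[OF mg] unfolding V_def E_def by auto
    then show "gends H e \<subseteq> V \<and> finite (gends H e) \<and> card (gends H e) \<le> 2"
      using finV finite_subset by auto
  qed
  obtain r where r: "r \<in> V" using con unfolding gconnected_def V_def by auto
  define R where "R = {(x, y). adjacent H x y}"
  define d where "d u = (LEAST n. (r, u) \<in> R ^^ n)" for u
  have reach: "\<exists>n. (r, u) \<in> R ^^ n" if "u \<in> V" for u
  proof -
    have "(r, u) \<in> R\<^sup>*" using con r that unfolding gconnected_def V_def R_def by auto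
    then show ?thesis using rtrancl_power by blast
  qed
  have dmin: "d u \<le> n" if "(r, u) \<in> R ^^ n" for u n
    unfolding d_def using that by (rule Least_le)
  have dval: "(r, u) \<in> R ^^ (d u)" if "u \<in> V" for u
    unfolding d_def using reach[OF that] by (rule LeastI_ex)
  have par: "\<exists>e. e \<in> E \<and> u \<in> gends H e \<and> (\<exists>w\<in>gends H e. d w + 1 = d u)" if u: "u \<in> V" "u \<noteq> r" for u
  proof -
    have "d u \<noteq> 0"
    proof
      assume "d u = 0"
      then show False using dval[OF u(1)] u(2) by simp
    qed
    then obtain n where n: "d u = Suc n" by (cases "d u") auto
    then have "(r, u) \<in> R ^^ n O R" using dval[OF u(1)] by simp
    then obtain w where w: "(r, w) \<in> R ^^ n" "(w, u) \<in> R" by auto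
    have "d w \<le> n" using dmin[OF w(1)] .
    moreover have Rs: "(r, u) \<in> R ^^ Suc (d w)"
    proof -
      have "w \<in> V"
      proof (cases n)
        case 0 then show ?thesis using w(1) r by simp
      next
        case (Suc m)
        then have "(r, w) \<in> R ^^ m O R" using w(1) by simp
        then obtain w' where "(w', w) \<in> R" by auto
        then obtain e where "e \<in> E" "w \<in> gends H e" unfolding R_def adjacent_def E_def by auto
        then show ?thesis using ends by auto
      qed
      then show ?thesis using dval w(2) by auto
    qed
    then have "Suc n \<le> Suc (d w)" using dmin[OF Rs] n by simp
    ultimately have dw: "d w + 1 = d u" using n by simp
    obtain e where e: "e \<in> E" "w \<in> gends H e" "u \<in> gends H e" using w(2) unfolding R_def adjacent_def E_def by auto
    then show ?thesis using dw by blast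
  qed
  define p where "p u = (SOME e. e \<in> E \<and> u \<in> gends H e \<and> (\<exists>w\<in>gends H e. d w + 1 = d u))" for u
  have pP: "p u \<in> E \<and> u \<in> gends H (p u) \<and> (\<exists>w\<in>gends H (p u). d w + 1 = d u)" if "u \<in> V - {r}" for u
  proof -
    have "\<exists>e. e \<in> E \<and> u \<in> gends H e \<and> (\<exists>w\<in>gends H e. d w + 1 = d u)" using par[of u] that by blast
    then show ?thesis unfolding p_def by (rule someI_ex)
  qed
  have key: "d u + 1 = d u'" if u: "u \<in> V - {r}" and u': "u' \<in> V - {r}" and ne: "u \<noteq> u'"
    and uin: "u \<in> gends H (p u')" for u u'
  proof -
    obtain w' where w': "w' \<in> gends H (p u')" "d w' + 1 = d u'" using pP[OF u'] by auto
    have "u' \<in> gends H (p u')" using pP[OF u'] by auto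
    moreover have "finite (gends H (p u'))" "card (gends H (p u')) \<le> 2" using ends pP[OF u'] by auto
    ultimately have "u = u' \<or> u = w' \<or> u' = w'" using three_in_two uin w'(1) by metis
    moreover have "u' \<noteq> w'" using w'(2) by auto
    ultimately show ?thesis using ne w'(2) by auto
  qed
  have injp: "inj_on p (V - {r})"
  proof (rule inj_onI)
    fix u u' assume u: "u \<in> V - {r}" and u': "u' \<in> V - {r}" and eq: "p u = p u'"
    show "u = u'"
    proof (rule ccontr)
      assume ne: "u \<noteq> u'"
      have "u \<in> gends H (p u')" using pP[OF u] eq by auto
      then have "d u + 1 = d u'" using key[OF u u' ne] by auto
      moreover have "u' \<in> gends H (p u)" using pP[OF u'] eq by auto
      then have "d u' + 1 = d u" using key[OF u' u] ne by auto
      ultimately show False by simp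
    qed
  qed
  define T where "T = p ` (V - {r})"
  have TE: "T \<subseteq> E" unfolding T_def using pP by auto
  have cT: "card T = card V - 1" unfolding T_def using card_image[OF injp] r finV by simp
  have tree: "A = {}" if A: "A \<in> cycle_space H" "A \<subseteq> T" for A
  proof (rule ccontr)
    assume "A \<noteq> {}"
    define U where "U = {u \<in> V - {r}. p u \<in> A}"
    have "U \<noteq> {}" using \<open>A \<noteq> {}\<close> A(2) unfolding U_def T_def by auto
    moreover have "finite U" unfolding U_def using finV by auto
    ultimately have "Max (d ` U) \<in> d ` U" by auto
    then obtain u where u: "u \<in> U" "d u = Max (d ` U)" by auto
    have umax: "d u' \<le> d u" if "u' \<in> U" for u'
      using u(2) that \<open>finite U\<close> by auto
    have uV: "u \<in> V - {r}" using u(1) unfolding U_def by auto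
    have s1: "{e \<in> A. u \<in> gends H e} = {p u}"
    proof
      show "{p u} \<subseteq> {e \<in> A. u \<in> gends H e}" using u(1) pP[OF uV] unfolding U_def by auto
      show "{e \<in> A. u \<in> gends H e} \<subseteq> {p u}"
      proof
        fix e assume e: "e \<in> {e \<in> A. u \<in> gends H e}"
        then obtain u' where u': "u' \<in> V - {r}" "e = p u'" using A(2) unfolding T_def by auto
        have "u' \<in> U" using u' e unfolding U_def by auto
        show "e \<in> {p u}"
        proof (cases "u = u'")
          case True then show ?thesis using u' by simp
        next
          case False
          then have "d u + 1 = d u'" using key[OF uV u'(1)] e u' by auto
          then show ?thesis using umax[OF \<open>u' \<in> U\<close>] by simp
        qed
      qed
    qed
    have s2: "{e \<in> A. gends H e = {u}} = {}"
    proof -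
      have "gends H (p u) \<noteq> {u}" using pP[OF uV] by auto
      show ?thesis
      proof (rule ccontr)
        assume "{e \<in> A. gends H e = {u}} \<noteq> {}"
        then obtain e where e: "e \<in> A" "gends H e = {u}" by auto
        then have "e \<in> {e \<in> A. u \<in> gends H e}" by auto
        then have "e = p u" using s1 by auto
        then show False using e \<open>gends H (p u) \<noteq> {u}\<close> by simp
      qed
    qed
    have "sub_degree H A u = 1" unfolding sub_degree_def s1 s2 by simp
    moreover have "even (sub_degree H A u)" using A(1) uV unfolding cycle_space_def V_def by auto
    ultimately show False by simp
  qed
  have inj: "inj_on (\<lambda>A. A - T) (cycle_space H)"
  proof (rule inj_onI)
    fix A B assume A: "A \<in> cycle_space H" and B: "B \<in> cycle_space H" and eq: "A - T = B - T"
    have "sd A B \<in> cycle_space H" by (rule cycle_sd[OF mg A B])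
    moreover have "sd A B \<subseteq> T" using eq by blast
    ultimately have "sd A B = {}" by (rule tree)
    then show "A = B" by blast
  qed
  have "(\<lambda>A. A - T) ` cycle_space H \<subseteq> Pow (E - T)" unfolding cycle_space_def E_def by auto
  then have "card ((\<lambda>A. A - T) ` cycle_space H) \<le> card (Pow (E - T))"
    by (intro card_mono) (use finE in auto)
  then have "card (cycle_space H) \<le> 2 ^ card (E - T)" using card_image[OF inj] finE by (simp add: card_Pow)
  moreover have "card (E - T) = card E - card T" using TE finE by (simp add: card_Diff_subset finite_subset)
  ultimately show ?thesis using cT unfolding E_def V_def by simp
qed

context imap begin

lemma A_rep:
  assumes wd: "\<forall>x\<in>W. Pd X (h x) = Pd X x" and x: "x \<in> W"
  shows "(orb2 g h x \<in> {q \<in> gedges Gm. \<forall>y\<in>q. Pd X y}) = Pd X x"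
proof
  assume "orb2 g h x \<in> {q \<in> gedges Gm. \<forall>y\<in>q. Pd X y}"
  then have "\<forall>y\<in>orb2 g h x. Pd X y" by simp
  then show "Pd X x" using orb_self[of x g h] by (rule bspec)
next
  assume "Pd X x"
  then show "orb2 g h x \<in> {q \<in> gedges Gm. \<forall>y\<in>q. Pd X y}" unfolding Gm_simps using sq_const[OF wd x] x by auto
qed

lemma A_sd:
  assumes wdX: "\<forall>x\<in>W. Pd X (h x) = Pd X x" and wdY: "\<forall>x\<in>W. Pd Y (h x) = Pd Y x"
  shows "{q \<in> gedges Gm. \<forall>y\<in>q. Pd (sd X Y) y} = sd {q \<in> gedges Gm. \<forall>y\<in>q. Pd X y} {q \<in> gedges Gm. \<forall>y\<in>q. Pd Y y}"
proof -
  have e: "Pd (sd X Y) y = (Pd X y \<noteq> Pd Y y)" for y by auto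
  have wd: "\<forall>x\<in>W. Pd (sd X Y) (h x) = Pd (sd X Y) x" using wdX wdY unfolding e by simp
  define AS where "AS = {q \<in> gedges Gm. \<forall>y\<in>q. Pd (sd X Y) y}"
  define AX where "AX = {q \<in> gedges Gm. \<forall>y\<in>q. Pd X y}"
  define AY where "AY = {q \<in> gedges Gm. \<forall>y\<in>q. Pd Y y}"
  have "AS = sd AX AY"
  proof (rule set_eqI)
    fix q
    show "q \<in> AS \<longleftrightarrow> q \<in> sd AX AY"
    proof (cases "q \<in> gedges Gm")
      case True
      then obtain x where x: "x \<in> W" "q = orb2 g h x" unfolding Gm_simps by auto
      have r1: "(q \<in> AS) = (Pd X x \<noteq> Pd Y x)" using A_rep[OF wd x(1)] e[of x] x(2) unfolding AS_def by simp
      have r2: "(q \<in> AX) = Pd X x" using A_rep[OF wdX x(1)] x(2) unfolding AX_def by simp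
      have r3: "(q \<in> AY) = Pd Y x" using A_rep[OF wdY x(1)] x(2) unfolding AY_def by simp
      have "(q \<in> sd AX AY) = ((q \<in> AX) \<noteq> (q \<in> AY))" by blast
      then show ?thesis using r1 r2 r3 by simp
    next
      case False then show ?thesis unfolding AS_def AX_def AY_def by auto
    qed
  qed
  then show ?thesis unfolding AS_def AX_def AY_def .
qed

lemma A_empty:
  assumes wd: "\<forall>x\<in>W. Pd X (h x) = Pd X x" and e: "{q \<in> gedges Gm. \<forall>y\<in>q. Pd X y} = {}" and x: "x \<in> W"
  shows "(g x \<in> X) = (x \<in> X)"
  using A_rep[OF wd x] e by auto

end

lemma union_orb_closed:
  assumes iv: "invs W p q" and ZW: "Z \<subseteq> orb2 p q ` W" and x: "x \<in> W"
  shows "(p x \<in> \<Union>Z) = (x \<in> \<Union>Z)" "(q x \<in> \<Union>Z) = (x \<in> \<Union>Z)"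
proof -
  have pW: "p x \<in> W" "p (p x) = x" "q x \<in> W" "q (q x) = x" using iv x unfolding invs_def by auto
  have cl: "p y \<in> \<Union>Z \<and> q y \<in> \<Union>Z" if yZ: "y \<in> \<Union>Z" for y
  proof -
    obtain O1 where O1: "O1 \<in> Z" "y \<in> O1" using yZ by auto
    then obtain w where "O1 = orb2 p q w" using ZW by auto
    then have "p y \<in> O1" "q y \<in> O1" using O1(2) orb_step by auto
    then show ?thesis using O1(1) by auto
  qed
  show "(p x \<in> \<Union>Z) = (x \<in> \<Union>Z)" using cl[of x] cl[of "p x"] pW by auto
  show "(q x \<in> \<Union>Z) = (x \<in> \<Union>Z)" using cl[of x] cl[of "q x"] pW by auto
qed

lemma union_orb_inj:
  assumes iv: "invs W p q" and Z1: "Z1 \<subseteq> orb2 p q ` W" and Z2: "Z2 \<subseteq> orb2 p q ` W" and eq: "\<Union>Z1 = \<Union>Z2"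
  shows "Z1 \<subseteq> Z2"
proof
  fix O1 assume O1: "O1 \<in> Z1"
  then obtain w where w: "w \<in> W" "O1 = orb2 p q w" using Z1 by auto
  have "w \<in> O1" using w(2) orb_self by simp
  then have "w \<in> \<Union>Z1" using O1 by auto
  then have "w \<in> \<Union>Z2" using eq by simp
  then obtain O2 where O2: "O2 \<in> Z2" "w \<in> O2" by auto
  then obtain w' where w': "w' \<in> W" "O2 = orb2 p q w'" using Z2 by auto
  have "orb2 p q w = orb2 p q w'" using invs.orb_disj[OF iv w(1) w'(1) orb_self] O2(2) w' by auto
  then show "O1 \<in> Z2" using w w' O2 by simp
qed

locale pmap =
  fixes W :: "'w set" and v f a :: "'w \<Rightarrow> 'w"
  assumes ismap: "is_map W v f a"
begin

lemma fv: "fpf_involution W v" "fpf_involution W f" "fpf_involution W a" "finite W"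
  and cm: "\<forall>x\<in>W. v (f x) = f (v x) \<and> v x \<noteq> f x"
  using ismap unfolding is_map_def by auto

sublocale M: imap W v f a
  using fv cm by unfold_locales auto

sublocale D: imap W f v a
  using fv cm by unfold_locales auto

lemma sq_sym: "orb2 f v x = orb2 v f x"
  unfolding orb2_def by (simp add: Un_commute)

lemma edges_eq: "gedges D.Gm = gedges M.Gm"
  unfolding M.Gm_simps D.Gm_simps using sq_sym by auto

abbreviation z where "z \<equiv> diag v f"

lemma zW: "x \<in> W \<Longrightarrow> z x \<in> W" and zz: "x \<in> W \<Longrightarrow> z (z x) = x"
  unfolding diag_def using M.gW M.hW M.gg M.hh cm by auto

lemma za: "invs W z a"
  unfolding invs_def using zW zz M.aW M.aa by auto

definition zc where "zc X \<longleftrightarrow> X \<subseteq> W \<and> (\<forall>x\<in>W. (z x \<in> X) = (x \<in> X)) \<and> (\<forall>x\<in>W. (a x \<in> X) = (x \<in> X))"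

lemma zc_sd: "zc X \<Longrightarrow> zc Y \<Longrightarrow> zc (sd X Y)"
  unfolding zc_def by auto

lemma zc_union: assumes "Z \<subseteq> orb2 z a ` W" shows "zc (\<Union>Z)"
proof -
  have "\<Union>Z \<subseteq> W" using assms invs.orbW[OF za] by blast
  then show ?thesis unfolding zc_def using union_orb_closed[OF za assms] by auto
qed

lemma zdef: "z x = v (f x)" unfolding diag_def by simp

lemma zf: "x \<in> W \<Longrightarrow> z (f x) = v x"
  unfolding diag_def using M.hh by auto

lemma zv: assumes x: "x \<in> W" shows "z (v x) = f x"
proof -
  have "f (v x) = v (f x)" using cm x by auto
  then have "z (v x) = v (v (f x))" unfolding diag_def by simp
  also have "\<dots> = f x" using M.gg[OF M.hW[OF x]] .
  finally show ?thesis .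
qed

lemma zc_wdM: assumes "zc X" shows "\<forall>x\<in>W. M.Pd X (f x) = M.Pd X x"
proof
  fix x assume x: "x \<in> W"
  have "(f x \<in> X) = (v x \<in> X)" using assms M.hW[OF x] zf[OF x] unfolding zc_def by metis
  moreover have "(v (f x) \<in> X) = (x \<in> X)" using assms x zdef[of x] unfolding zc_def by metis
  ultimately show "M.Pd X (f x) = M.Pd X x" by auto
qed

lemma zc_wdD: assumes "zc X" shows "\<forall>x\<in>W. D.Pd X (v x) = D.Pd X x"
proof
  fix x assume x: "x \<in> W"
  have "(v x \<in> X) = (f x \<in> X)" using assms M.gW[OF x] zv[OF x] unfolding zc_def by metis
  moreover have "(f (v x) \<in> X) = (x \<in> X)" using assms x zdef[of x] cm unfolding zc_def by metis
  ultimately show "D.Pd X (v x) = D.Pd X x" by auto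
qed

lemma zc_MD: assumes "zc X" shows "{q \<in> gedges D.Gm. \<forall>y\<in>q. D.Pd X y} = {q \<in> gedges M.Gm. \<forall>y\<in>q. M.Pd X y}"
proof -
  have "M.Pd X y = D.Pd X y" if "y \<in> W" for y
  proof -
    have "(v y \<in> X) = (f y \<in> X)" using assms M.gW[OF that] zv[OF that] unfolding zc_def by metis
    then show ?thesis by auto
  qed
  moreover have "q \<subseteq> W" if "q \<in> gedges M.Gm" for q using that M.gh.orbW unfolding M.Gm_simps by auto
  ultimately show ?thesis unfolding edges_eq by blast
qed

definition vc where "vc Y \<longleftrightarrow> Y \<subseteq> W \<and> (\<forall>x\<in>W. (v x \<in> Y) = (x \<in> Y)) \<and> (\<forall>x\<in>W. (a x \<in> Y) = (x \<in> Y))"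

lemma vc_union: assumes "U \<subseteq> orb2 v a ` W" shows "vc (\<Union>U)"
proof -
  have "\<Union>U \<subseteq> W" using assms M.ga.orbW by blast
  then show ?thesis unfolding vc_def using union_orb_closed[OF M.ga.invs_axioms assms] by auto
qed

lemma vc_wdD: assumes "vc Y" shows "\<forall>x\<in>W. D.Pd Y (v x) = D.Pd Y x"
proof
  fix x assume x: "x \<in> W"
  have "(v x \<in> Y) = (x \<in> Y)" using assms x unfolding vc_def by auto
  moreover have "(f (v x) \<in> Y) = (f x \<in> Y)" using assms M.hW[OF x] cm x unfolding vc_def by metis
  ultimately show "D.Pd Y (v x) = D.Pd Y x" by auto
qed

lemma mem_U: assumes U: "U \<subseteq> orb2 v a ` W" and u: "u \<in> W" shows "(orb2 v a u \<in> U) = (u \<in> \<Union>U)"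
proof
  assume "orb2 v a u \<in> U" then show "u \<in> \<Union>U" using orb_self[of u v a] by (rule UnionI)
next
  assume "u \<in> \<Union>U"
  then obtain O1 where O1: "O1 \<in> U" "u \<in> O1" by auto
  then obtain w where w: "w \<in> W" "O1 = orb2 v a w" using U by auto
  then have "orb2 v a u = O1" using M.ga.orb_eq[OF w(1)] O1(2) by simp
  then show "orb2 v a u \<in> U" using O1 by simp
qed

lemma cob_eq: assumes U: "U \<subseteq> orb2 v a ` W"
  shows "coboundary M.Gm U = {q \<in> gedges D.Gm. \<forall>y\<in>q. D.Pd (\<Union>U) y}"
proof (rule set_eqI)
  fix q
  show "q \<in> coboundary M.Gm U \<longleftrightarrow> q \<in> {q \<in> gedges D.Gm. \<forall>y\<in>q. D.Pd (\<Union>U) y}"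
  proof (cases "q \<in> gedges M.Gm")
    case True
    then obtain x where x: "x \<in> W" "q = orb2 v f x" unfolding M.Gm_simps by auto
    have en: "gends M.Gm q = {orb2 v a x, orb2 v a (f x)}" using M.ends_sq[OF x(1)] x(2) by simp
    have "(q \<in> coboundary M.Gm U) = (gends M.Gm q \<inter> U \<noteq> {} \<and> gends M.Gm q - U \<noteq> {})"
      unfolding coboundary_def using True by simp
    also have "\<dots> = ((orb2 v a x \<in> U) \<noteq> (orb2 v a (f x) \<in> U))" unfolding en by auto
    finally have "(q \<in> coboundary M.Gm U) = ((orb2 v a x \<in> U) \<noteq> (orb2 v a (f x) \<in> U))" .
    also have "\<dots> = ((x \<in> \<Union>U) \<noteq> (f x \<in> \<Union>U))" using mem_U[OF U x(1)] mem_U[OF U M.hW[OF x(1)]] by simp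
    also have "\<dots> = D.Pd (\<Union>U) x" by auto
    also have "\<dots> = (orb2 f v x \<in> {q \<in> gedges D.Gm. \<forall>y\<in>q. D.Pd (\<Union>U) y})"
      using D.A_rep[OF vc_wdD[OF vc_union[OF U]] x(1)] by simp
    finally show ?thesis using x(2) sq_sym by simp
  next
    case False
    then show ?thesis using cob_sub[of M.Gm U] edges_eq by auto
  qed
qed

lemma conn_closed:
  assumes mc: "map_connected W v f a" and XW: "X \<subseteq> W"
    and cv: "\<forall>x\<in>X. v x \<in> X" and cf: "\<forall>x\<in>X. f x \<in> X" and ca: "\<forall>x\<in>X. a x \<in> X" and x: "x \<in> X"
  shows "W \<subseteq> X"
proof
  fix y assume y: "y \<in> W"
  have "(x, y) \<in> ({(u, v u) | u. True} \<union> {(u, f u) | u. True} \<union> {(u, a u) | u. True})\<^sup>*"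
    using mc x XW y unfolding map_connected_def by auto
  then show "y \<in> X"
    by (induction rule: rtrancl_induct) (use x cv cf ca in auto)
qed

lemma D_connected:
  assumes mc: "map_connected W v f a"
  shows "gconnected D.Gm"
proof -
  have Wne: "W \<noteq> {}" using mc unfolding map_connected_def by auto
  let ?R = "{(x, y). adjacent D.Gm x y}"
  have step: "(orb2 f a x, orb2 f a y) \<in> ?R\<^sup>*" if x: "x \<in> W" and y: "y \<in> W" for x y
  proof -
    have "(x, y) \<in> ({(u, v u) | u. True} \<union> {(u, f u) | u. True} \<union> {(u, a u) | u. True})\<^sup>*"
      using mc x y unfolding map_connected_def by auto
    then have "y \<in> W \<and> (orb2 f a x, orb2 f a y) \<in> ?R\<^sup>*"
    proof (induction rule: rtrancl_induct)
      case base then show ?case using x by simp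
    next
      case (step y y')
      then have yW: "y \<in> W" and IH: "(orb2 f a x, orb2 f a y) \<in> ?R\<^sup>*" by auto
      consider "y' = v y" | "y' = f y" | "y' = a y" using step(2) by auto
      then show ?case
      proof cases
        case 1
        have y'W: "y' \<in> W" using 1 M.gW[OF yW] by simp
        show ?thesis
        proof (cases "orb2 f a y = orb2 f a y'")
          case True then show ?thesis using IH y'W by simp
        next
          case False
          have "orb2 f v y \<in> gedges D.Gm" unfolding D.Gm_simps using yW by auto
          moreover have "gends D.Gm (orb2 f v y) = {orb2 f a y, orb2 f a y'}" using D.ends_sq[OF yW] 1 by simp
          ultimately have "adjacent D.Gm (orb2 f a y) (orb2 f a y')" unfolding adjacent_def using False by auto
          then show ?thesis using IH y'W by (auto intro: rtrancl_into_rtrancl)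
        qed
      next
        case 2
        have "orb2 f a y' = orb2 f a y" using D.ga.orb_eq[OF yW] orb_step(1)[OF orb_self[of y f a]] 2 by simp
        then show ?thesis using IH 2 D.gW[OF yW] by simp
      next
        case 3
        have "orb2 f a y' = orb2 f a y" using D.ga.orb_eq[OF yW] orb_step(2)[OF orb_self[of y f a]] 3 by simp
        then show ?thesis using IH 3 D.aW[OF yW] by simp
      qed
    qed
    then show ?thesis by simp
  qed
  show ?thesis unfolding gconnected_def D.Gm_simps using Wne step by auto
qed

end

context pmap begin

abbreviation AD where "AD X \<equiv> {q \<in> gedges D.Gm. \<forall>y\<in>q. D.Pd X y}"
abbreviation AM where "AM X \<equiv> {q \<in> gedges M.Gm. \<forall>y\<in>q. M.Pd X y}"

lemma zc_aX: "zc X \<Longrightarrow> \<forall>x\<in>W. (a x \<in> X) = (x \<in> X)" unfolding zc_def by auto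
lemma vc_aX: "vc X \<Longrightarrow> \<forall>x\<in>W. (a x \<in> X) = (x \<in> X)" unfolding vc_def by auto

lemma sd_swap: "sd A B = sd C D \<Longrightarrow> sd A C = sd B D"
  by blast

lemma core:
  assumes mc: "map_connected W v f a" and S: "independent_set M.Gm S" and ll: "loopless M.Gm"
    and odd: "\<forall>u\<in>S. odd (degree M.Gm u)"
  shows "2 ^ (card (orb2 z a ` W) - 1 + card S) \<le> card (cycle_space D.Gm)"
proof -
  let ?Zs = "orb2 z a ` W"
  have Wne: "W \<noteq> {}" using mc unfolding map_connected_def by auto
  then obtain w0 where w0: "w0 \<in> W" by auto
  define Z0 where "Z0 = orb2 z a w0"
  have Z0: "Z0 \<in> ?Zs" unfolding Z0_def using w0 by auto
  have finZ: "finite ?Zs" using fv(4) by auto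
  have SV: "S \<subseteq> orb2 v a ` W" using S unfolding independent_set_def M.Gm_simps by auto
  have finS: "finite S" using SV fv(4) finite_subset by blast
  define F where "F p = AD (sd (\<Union>(fst p)) (\<Union>(snd p)))" for p :: "'w set set \<times> 'w set set"
  have Fdecomp: "F (Z1, U1) = sd (AM (\<Union>Z1)) (coboundary M.Gm U1)"
    if Z1: "Z1 \<subseteq> ?Zs" and U1: "U1 \<subseteq> S" for Z1 U1
  proof -
    have zc1: "zc (\<Union>Z1)" by (rule zc_union[OF Z1])
    have U1V: "U1 \<subseteq> orb2 v a ` W" using U1 SV by auto
    have vc1: "vc (\<Union>U1)" by (rule vc_union[OF U1V])
    have "F (Z1, U1) = sd (AD (\<Union>Z1)) (AD (\<Union>U1))"
      unfolding F_def fst_conv snd_conv by (rule D.A_sd[OF zc_wdD[OF zc1] vc_wdD[OF vc1]])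
    also have "\<dots> = sd (AM (\<Union>Z1)) (coboundary M.Gm U1)" using zc_MD[OF zc1] cob_eq[OF U1V] by simp
    finally show ?thesis .
  qed
  have Fcyc: "F p \<in> cycle_space D.Gm" if p: "p \<in> Pow (?Zs - {Z0}) \<times> Pow S" for p
  proof -
    obtain Z1 U1 where pz: "p = (Z1, U1)" by (cases p)
    have Z1: "Z1 \<subseteq> ?Zs" and U1: "U1 \<subseteq> S" using p pz by auto
    have zc1: "zc (\<Union>Z1)" by (rule zc_union[OF Z1])
    have U1V: "U1 \<subseteq> orb2 v a ` W" using U1 SV by auto
    have vc1: "vc (\<Union>U1)" by (rule vc_union[OF U1V])
    have "F p = sd (AD (\<Union>Z1)) (AD (\<Union>U1))"
      unfolding F_def pz fst_conv snd_conv by (rule D.A_sd[OF zc_wdD[OF zc1] vc_wdD[OF vc1]])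
    moreover have "AD (\<Union>Z1) \<in> cycle_space D.Gm" by (rule D.L[OF zc_aX[OF zc1] zc_wdD[OF zc1]])
    moreover have "AD (\<Union>U1) \<in> cycle_space D.Gm" by (rule D.L[OF vc_aX[OF vc1] vc_wdD[OF vc1]])
    ultimately show ?thesis using cycle_sd[OF D.mgraph_Gm] by simp
  qed
  have disjZ0: "\<Union>Z1 \<inter> Z0 = {}" if Z1: "Z1 \<subseteq> ?Zs - {Z0}" for Z1
  proof (rule ccontr)
    assume "\<Union>Z1 \<inter> Z0 \<noteq> {}"
    then obtain x O1 where x: "O1 \<in> Z1" "x \<in> O1" "x \<in> Z0" by auto
    then obtain w where w: "w \<in> W" "O1 = orb2 z a w" using Z1 by auto
    have "O1 = Z0" using invs.orb_disj[OF za w(1) w0] x w unfolding Z0_def by auto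
    then show False using x(1) Z1 by auto
  qed
  have inj: "inj_on F (Pow (?Zs - {Z0}) \<times> Pow S)"
  proof (rule inj_onI)
    fix p1 p2 assume p1: "p1 \<in> Pow (?Zs - {Z0}) \<times> Pow S" and p2: "p2 \<in> Pow (?Zs - {Z0}) \<times> Pow S"
      and eq: "F p1 = F p2"
    obtain Z1 U1 where pz1: "p1 = (Z1, U1)" by (cases p1)
    obtain Z2 U2 where pz2: "p2 = (Z2, U2)" by (cases p2)
    have Z1: "Z1 \<subseteq> ?Zs - {Z0}" and U1: "U1 \<subseteq> S" using p1 pz1 by auto
    have Z2: "Z2 \<subseteq> ?Zs - {Z0}" and U2: "U2 \<subseteq> S" using p2 pz2 by auto
    have zc1: "zc (\<Union>Z1)" using zc_union Z1 by blast
    have zc2: "zc (\<Union>Z2)" using zc_union Z2 by blast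
    define Xd where "Xd = sd (\<Union>Z1) (\<Union>Z2)"
    have zcd: "zc Xd" unfolding Xd_def by (rule zc_sd[OF zc1 zc2])
    have d1: "F (Z1, U1) = sd (AM (\<Union>Z1)) (coboundary M.Gm U1)" by (rule Fdecomp) (use Z1 U1 in auto)
    have d2: "F (Z2, U2) = sd (AM (\<Union>Z2)) (coboundary M.Gm U2)" by (rule Fdecomp) (use Z2 U2 in auto)
    have "sd (AM (\<Union>Z1)) (coboundary M.Gm U1) = sd (AM (\<Union>Z2)) (coboundary M.Gm U2)"
      using eq unfolding pz1 pz2 d1 d2 .
    then have "sd (AM (\<Union>Z1)) (AM (\<Union>Z2)) = sd (coboundary M.Gm U1) (coboundary M.Gm U2)" by (rule sd_swap)
    also have "\<dots> = coboundary M.Gm (sd U1 U2)" using cob_sd[OF M.mgraph_Gm] by simp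
    finally have e1: "AM Xd = coboundary M.Gm (sd U1 U2)"
      using M.A_sd[OF zc_wdM[OF zc1] zc_wdM[OF zc2]] unfolding Xd_def by simp
    have "AM Xd \<in> cycle_space M.Gm" by (rule M.L[OF zc_aX[OF zcd] zc_wdM[OF zcd]])
    then have "coboundary M.Gm (sd U1 U2) \<in> cycle_space M.Gm" using e1 by simp
    moreover have "sd U1 U2 \<subseteq> S" using U1 U2 by auto
    ultimately have "sd U1 U2 = {}" using indep_cycle_empty[OF M.mgraph_Gm ll S] odd by blast
    then have U12: "U1 = U2" by auto
    have "AM Xd = {}" using e1 \<open>sd U1 U2 = {}\<close> unfolding coboundary_def by simp
    then have vcl: "\<forall>x\<in>W. (v x \<in> Xd) = (x \<in> Xd)" using M.A_empty[OF zc_wdM[OF zcd]] by blast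
    have XdW: "Xd \<subseteq> W" using zcd unfolding zc_def by auto
    have "Xd = {}"
    proof (rule ccontr)
      assume "Xd \<noteq> {}"
      then obtain x where x: "x \<in> Xd" by auto
      have cv: "\<forall>x\<in>Xd. v x \<in> Xd" using vcl XdW by auto
      have cz: "\<forall>x\<in>Xd. z x \<in> Xd" using zcd XdW unfolding zc_def by auto
      have cf: "\<forall>x\<in>Xd. f x \<in> Xd"
      proof
        fix y assume y: "y \<in> Xd"
        then have yW: "y \<in> W" using XdW by auto
        have "z (v y) \<in> Xd" using cv cz y by auto
        then show "f y \<in> Xd" using zv[OF yW] by simp
      qed
      have ca: "\<forall>x\<in>Xd. a x \<in> Xd" using zcd XdW unfolding zc_def by auto
      have "W \<subseteq> Xd" by (rule conn_closed[OF mc XdW cv cf ca x])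
      then have "w0 \<in> Xd" using w0 by auto
      moreover have "w0 \<in> Z0" unfolding Z0_def by (rule orb_self)
      ultimately show False using disjZ0[OF Z1] disjZ0[OF Z2] unfolding Xd_def by auto
    qed
    then have "\<Union>Z1 = \<Union>Z2" unfolding Xd_def by auto
    moreover have "Z1 \<subseteq> ?Zs" "Z2 \<subseteq> ?Zs" using Z1 Z2 by auto
    ultimately have "Z1 \<subseteq> Z2" "Z2 \<subseteq> Z1" using union_orb_inj[OF za] by metis+
    then have "Z1 = Z2" by (rule subset_antisym)
    then show "p1 = p2" using pz1 pz2 U12 by simp
  qed
  have c1: "card (Pow (?Zs - {Z0}) \<times> Pow S) = 2 ^ (card ?Zs - 1) * 2 ^ card S"
    using finZ finS Z0 by (simp add: card_cartesian_product card_Pow)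
  have "card (Pow (?Zs - {Z0}) \<times> Pow S) = card (F ` (Pow (?Zs - {Z0}) \<times> Pow S))"
    using card_image[OF inj] by simp
  also have "\<dots> \<le> card (cycle_space D.Gm)"
  proof (rule card_mono)
    have "cycle_space D.Gm \<subseteq> Pow (gedges D.Gm)" unfolding cycle_space_def by auto
    moreover have "finite (gedges D.Gm)" using mgraph_fin[OF D.mgraph_Gm] by simp
    ultimately show "finite (cycle_space D.Gm)" using finite_subset by blast
    show "F ` (Pow (?Zs - {Z0}) \<times> Pow S) \<subseteq> cycle_space D.Gm" using Fcyc by auto
  qed
  finally show ?thesis using c1 by (simp add: power_add)
qed

end

context pmap begin

lemma planar_bound:
  assumes mc: "map_connected W v f a" and eu: "euler_char W v f a = 2"
    and S: "independent_set M.Gm S" and ll: "loopless M.Gm" and odd: "\<forall>u\<in>S. odd (degree M.Gm u)"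
  shows "int (card S) \<le> int (card (cycles2 W v a)) - int (zigzag_count W v f a)"
proof -
  have Wne: "W \<noteq> {}" using mc unfolding map_connected_def by auto
  define cZ where "cZ = card (orb2 z a ` W)"
  define E where "E = card (gedges D.Gm)"
  define Fc where "Fc = card (gverts D.Gm)"
  define Vc where "Vc = card (cycles2 W v a)"
  have "2 ^ (cZ - 1 + card S) \<le> card (cycle_space D.Gm)" unfolding cZ_def by (rule core[OF mc S ll odd])
  also have "\<dots> \<le> 2 ^ (E - (Fc - 1))" unfolding E_def Fc_def
    by (rule cycle_card_le[OF D.mgraph_Gm D_connected[OF mc]])
  finally have k: "cZ - 1 + card S \<le> E - (Fc - 1)" using power_increasing_iff[of "2::nat"] by simp
  have cZ1: "cZ \<ge> 1" unfolding cZ_def using Wne fv(4) by (simp add: Suc_leI card_gt_0_iff)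
  have Fc1: "Fc \<ge> 1" unfolding Fc_def D.Gm_simps using Wne fv(4) by (simp add: Suc_leI card_gt_0_iff)
  have Vc1: "Vc \<ge> 1" unfolding Vc_def cycles2_def using Wne fv(4) by (simp add: Suc_leI card_gt_0_iff)
  have "E = card (squares W v f)" unfolding E_def edges_eq M.Gm_simps squares_def cycles2_def ..
  then have eu2: "int Vc - int E + int Fc = 2" using eu unfolding euler_char_def Vc_def Fc_def D.Gm_simps cycles2_def
    by simp
  have zc: "zigzag_count W v f a = cZ" unfolding zigzag_count_def cZ_def cycles2_def ..
  show ?thesis using k cZ1 Fc1 Vc1 eu2 unfolding zc Vc_def[symmetric] by linarith
qed

end

lemma iso_transfer:
  assumes mg: "mgraph G" and iso: "mgraph_iso G H" and ll: "loopless G" and S: "independent_set G S"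
    and odd: "\<forall>u\<in>gverts G. odd (degree G u)"
  shows "\<exists>S'. independent_set H S' \<and> card S' = card S \<and> card (gverts H) = card (gverts G)
     \<and> loopless H \<and> (\<forall>u\<in>S'. odd (degree H u))"
proof -
  obtain \<phi> \<psi> where phi: "bij_betw \<phi> (gverts G) (gverts H)" and psi: "bij_betw \<psi> (gedges G) (gedges H)"
    and en: "\<forall>e\<in>gedges G. gends H (\<psi> e) = \<phi> ` gends G e"
    using iso unfolding mgraph_iso_def by auto
  have injphi: "inj_on \<phi> (gverts G)" using phi bij_betw_def by blast
  have endsV: "gends G e \<subseteq> gverts G" if "e \<in> gedges G" for e using mgraph_ends[OF mg that] by auto
  have SV: "S \<subseteq> gverts G" using S unfolding independent_set_def by auto
  have memiff: "(\<phi> u \<in> gends H (\<psi> e)) = (u \<in> gends G e)" if u: "u \<in> gverts G" and e: "e \<in> gedges G" for u e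
  proof -
    have "(\<phi> u \<in> \<phi> ` gends G e) = (u \<in> gends G e)"
      using inj_on_image_mem_iff[OF injphi u endsV[OF e]] .
    then show ?thesis using en e by simp
  qed
  have llH: "loopless H"
    unfolding loopless_def
  proof
    fix e' assume e': "e' \<in> gedges H"
    then obtain e where e: "e \<in> gedges G" "e' = \<psi> e" using psi unfolding bij_betw_def by auto
    have "card (\<phi> ` gends G e) = card (gends G e)" using card_image inj_on_subset[OF injphi endsV[OF e(1)]] by blast
    then show "card (gends H e') = 2" using en e ll unfolding loopless_def by auto
  qed
  let ?S' = "\<phi> ` S"
  have indep: "independent_set H ?S'"
    unfolding independent_set_def
  proof
    show "?S' \<subseteq> gverts H" using SV phi unfolding bij_betw_def by auto
    show "\<forall>u\<in>?S'. \<forall>w\<in>?S'. \<not> adjacent H u w"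
    proof (intro ballI notI)
      fix u' w' assume u': "u' \<in> ?S'" and w': "w' \<in> ?S'" and adj: "adjacent H u' w'"
      obtain u w where uw: "u \<in> S" "w \<in> S" "u' = \<phi> u" "w' = \<phi> w" using u' w' by auto
      obtain e' where e': "e' \<in> gedges H" "u' \<in> gends H e'" "w' \<in> gends H e'" "u' \<noteq> w'"
        using adj unfolding adjacent_def by auto
      obtain e where e: "e \<in> gedges G" "e' = \<psi> e" using psi e'(1) unfolding bij_betw_def by auto
      have "u \<in> gends G e" "w \<in> gends G e" using memiff[OF _ e(1)] e'(2,3) uw e(2) SV by auto
      moreover have "u \<noteq> w" using e'(4) uw by auto
      ultimately have "adjacent G u w" unfolding adjacent_def using e(1) by auto
      then show False using S uw unfolding independent_set_def by auto
    qed
  qed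
  have deg: "degree H (\<phi> u) = degree G u" if u: "u \<in> gverts G" for u
  proof -
    have l1: "{e' \<in> gedges H. gends H e' = {\<phi> u}} = {}" using llH unfolding loopless_def by fastforce
    have l2: "{e \<in> gedges G. gends G e = {u}} = {}" using ll unfolding loopless_def by fastforce
    have "{e' \<in> gedges H. \<phi> u \<in> gends H e'} = \<psi> ` {e \<in> gedges G. u \<in> gends G e}"
    proof
      show "{e' \<in> gedges H. \<phi> u \<in> gends H e'} \<subseteq> \<psi> ` {e \<in> gedges G. u \<in> gends G e}"
      proof
        fix e' assume e': "e' \<in> {e' \<in> gedges H. \<phi> u \<in> gends H e'}"
        then obtain e where e: "e \<in> gedges G" "e' = \<psi> e" using psi unfolding bij_betw_def by auto
        then have "u \<in> gends G e" using memiff[OF u e(1)] e' by auto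
        then show "e' \<in> \<psi> ` {e \<in> gedges G. u \<in> gends G e}" using e by auto
      qed
      show "\<psi> ` {e \<in> gedges G. u \<in> gends G e} \<subseteq> {e' \<in> gedges H. \<phi> u \<in> gends H e'}"
        using memiff[OF u] psi unfolding bij_betw_def by auto
    qed
    moreover have "card (\<psi> ` {e \<in> gedges G. u \<in> gends G e}) = card {e \<in> gedges G. u \<in> gends G e}"
      by (rule card_image) (use psi in \<open>auto simp: bij_betw_def intro: inj_on_subset\<close>)
    ultimately show ?thesis unfolding degree_def sub_degree_def l1 l2 by simp
  qed
  show ?thesis
  proof (intro exI conjI)
    show "independent_set H ?S'" by (rule indep)
    show "card ?S' = card S" using card_image inj_on_subset[OF injphi SV] by blast
    show "card (gverts H) = card (gverts G)" using phi bij_betw_same_card by metis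
    show "loopless H" by (rule llH)
    show "\<forall>u\<in>?S'. odd (degree H u)" using deg odd SV by auto
  qed
qed

theorem theorem2p14:
  fixes G :: "('v,'e) mgraph"
  assumes "mgraph G"
    and "gconnected G"
    and "map_rich G"
    and "loopless G"
    and "\<forall>u\<in>gverts G. odd (degree G u)"
  shows "int (independence_number G)
           \<le> int (card (gverts G)) - 1 - int (gf2_dim (bicycle_space G))
         \<and> (\<forall>(W::nat set) v f a. planar_map W v f a \<and> mgraph_iso G (map_graph W v f a) \<longrightarrow>
           int (independence_number G) \<le> int (card (gverts G)) - int (zigzag_count W v f a))"
proof
  have "independence_number G + gf2_dim (bicycle_space G) + 1 \<le> card (gverts G)"
    by (rule part1[OF assms(1,2,4,5)])
  then show "int (independence_number G) \<le> int (card (gverts G)) - 1 - int (gf2_dim (bicycle_space G))"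
    by linarith
  show "\<forall>(W::nat set) v f a. planar_map W v f a \<and> mgraph_iso G (map_graph W v f a) \<longrightarrow>
           int (independence_number G) \<le> int (card (gverts G)) - int (zigzag_count W v f a)"
  proof (intro allI impI)
    fix W :: "nat set" and v f a
    assume pm: "planar_map W v f a \<and> mgraph_iso G (map_graph W v f a)"
    then have im: "is_map W v f a" and mc: "map_connected W v f a" and eu: "euler_char W v f a = 2"
      and iso: "mgraph_iso G (map_graph W v f a)" unfolding planar_map_def by auto
    interpret P: pmap W v f a using im by unfold_locales
    obtain S where S: "independent_set G S" "independence_number G = card S"
      using indep_number[OF assms(1)] by metis
    obtain S' where S': "independent_set (map_graph W v f a) S'" "card S' = card S"
      "card (gverts (map_graph W v f a)) = card (gverts G)" "loopless (map_graph W v f a)"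
      "\<forall>u\<in>S'. odd (degree (map_graph W v f a) u)"
      using iso_transfer[OF assms(1) iso assms(4) S(1) assms(5)] by blast
    have "int (card S') \<le> int (card (cycles2 W v a)) - int (zigzag_count W v f a)"
      by (rule P.planar_bound[OF mc eu S'(1) S'(4) S'(5)])
    moreover have "card (cycles2 W v a) = card (gverts G)" using S'(3) P.M.Gm_simps(1) unfolding cycles2_def by simp
    ultimately show "int (independence_number G) \<le> int (card (gverts G)) - int (zigzag_count W v f a)"
      using S(2) S'(2) by simp
  qed
qed

end
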